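(* Let $G$ be a non-complete connected graph and $v\in V(G)$ a universal vertex. Let $\widetilde G_v$ be the graph obtained from $G$ by adding a new vertex $v'$ whose neighbourhood is exactly $N_G(v)$ (a false twin of $v$). Then $\chi(\mathcal{R}(\widetilde G_v))=\chi(\mathcal{R}(G))$.
   Context: For a connected graph $G$, a search tree on $G$ is a rooted tree with vertex set $V(G)$ defined recursively: its root is some vertex $r\in V(G)$, and the children of $r$ are the roots of search trees on the connected components of $G-r$. For a rooted tree $T$ and $w\in V(T)$, $T|w$ denotes the subtree rooted at $w$. Let $T$ be a search tree on $G$, let $v$ be a child of $u$ in $T$, and let $p$ be the parent of $u$ (if it exists). The $uv$-rotation transforms $T$ into the search tree $T'$ in which: $u$ is a child of $v$ and $v$ is a child of $p$ (or $v$ is the root if $u$ was the root); every subtree of $u$ in $T$ other than $T|v$ is a subtree of $u$ in $T'$; and every subtree $S$ of $v$ in $T$ is a subtree of $u$ in $T'$ if $u$ is adjacent in $G$ to some vertex of $S$, and a subtree of $v$ in $T'$ otherwise. The rotation graph $\mathcal{R}(G)$ is the graph whose vertices are the search trees on $G$, two being adjacent iff they differ by one rotation. $\chi$ denotes chromatic number. A vertex is universal if it is adjacent to all other vertices. *)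

theory Defs
  imports Main
begin

definition graph :: "'a set \<Rightarrow> ('a \<Rightarrow> 'a \<Rightarrow> bool) \<Rightarrow> bool" where
  "graph V E \<longleftrightarrow> finite V \<and> (\<forall>x y. E x y \<longrightarrow> x \<in> V \<and> y \<in> V \<and> x \<noteq> y \<and> E y x)"

definition reach_in :: "('a \<Rightarrow> 'a \<Rightarrow> bool) \<Rightarrow> 'a set \<Rightarrow> 'a \<Rightarrow> 'a \<Rightarrow> bool" where
  "reach_in E S x y \<longleftrightarrow> (x, y) \<in> (Restr {(a, b). E a b} S)\<^sup>*"

definition conn :: "('a \<Rightarrow> 'a \<Rightarrow> bool) \<Rightarrow> 'a set \<Rightarrow> bool" where
  "conn E S \<longleftrightarrow> S \<noteq> {} \<and> (\<forall>x\<in>S. \<forall>y\<in>S. reach_in E S x y)"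

definition comps :: "('a \<Rightarrow> 'a \<Rightarrow> bool) \<Rightarrow> 'a set \<Rightarrow> 'a set set" where
  "comps E S = (\<lambda>x. {y \<in> S. reach_in E S x y}) ` S"

text \<open>Rooted trees are represented by a parent function: par x = Some y iff y is the
  parent of x; roots and non-vertices have par x = None.
  desc par w is the vertex set of the subtree T|w.\<close>
definition desc :: "('a \<Rightarrow> 'a option) \<Rightarrow> 'a \<Rightarrow> 'a set" where
  "desc par w = {x. (x, w) \<in> {(a, b). par a = Some b}\<^sup>*}"

text \<open>st E par S r: the subtree of par rooted at r has vertex set S and is a search tree
  on the (connected) induced subgraph G[S], following the recursive definition.\<close>
inductive st :: "('a \<Rightarrow> 'a \<Rightarrow> bool) \<Rightarrow> ('a \<Rightarrow> 'a option) \<Rightarrow> 'a set \<Rightarrow> 'a \<Rightarrow> bool"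
  for E par where
  "\<lbrakk> r \<in> S; conn E S; desc par r = S;
     bij_betw (desc par) {c. par c = Some r} (comps E (S - {r}));
     \<forall>c. par c = Some r \<longrightarrow> st E par (desc par c) c \<rbrakk> \<Longrightarrow> st E par S r"

definition search_tree :: "'a set \<Rightarrow> ('a \<Rightarrow> 'a \<Rightarrow> bool) \<Rightarrow> ('a \<Rightarrow> 'a option) \<Rightarrow> bool" where
  "search_tree V E par \<longleftrightarrow>
     (\<exists>r. par r = None \<and> st E par V r) \<and> (\<forall>x. x \<notin> V \<longrightarrow> par x = None)"

text \<open>The uv-rotation (v a child of u): v takes u's place under p (or becomes the root),
  u becomes a child of v, and each subtree of v whose vertex set contains a neighbour of u
  is moved below u; everything else is unchanged.\<close>
definition rotate :: "('a \<Rightarrow> 'a \<Rightarrow> bool) \<Rightarrow> ('a \<Rightarrow> 'a option) \<Rightarrow> 'a \<Rightarrow> 'a \<Rightarrow> ('a \<Rightarrow> 'a option)" where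
  "rotate E par u v = (\<lambda>x.
     if x = v then par u
     else if x = u then Some v
     else if par x = Some v \<and> (\<exists>y\<in>desc par x. E u y) then Some u
     else par x)"

definition rot_adj :: "('a \<Rightarrow> 'a \<Rightarrow> bool) \<Rightarrow> ('a \<Rightarrow> 'a option) \<Rightarrow> ('a \<Rightarrow> 'a option) \<Rightarrow> bool" where
  "rot_adj E T T' \<longleftrightarrow> T \<noteq> T' \<and>
     ((\<exists>u v. T v = Some u \<and> T' = rotate E T u v) \<or> (\<exists>u v. T' v = Some u \<and> T = rotate E T' u v))"

definition rot_vertices :: "'a set \<Rightarrow> ('a \<Rightarrow> 'a \<Rightarrow> bool) \<Rightarrow> ('a \<Rightarrow> 'a option) set" where
  "rot_vertices V E = {T. search_tree V E T}"

definition chromatic_number :: "'b set \<Rightarrow> ('b \<Rightarrow> 'b \<Rightarrow> bool) \<Rightarrow> nat" where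
  "chromatic_number W A = (LEAST k. \<exists>f :: 'b \<Rightarrow> nat.
      (\<forall>x\<in>W. f x < k) \<and> (\<forall>x\<in>W. \<forall>y\<in>W. A x y \<longrightarrow> f x \<noteq> f y))"

definition chi_rot :: "'a set \<Rightarrow> ('a \<Rightarrow> 'a \<Rightarrow> bool) \<Rightarrow> nat" where
  "chi_rot V E = chromatic_number (rot_vertices V E) (rot_adj E)"

definition add_false_twin :: "('a \<Rightarrow> 'a \<Rightarrow> bool) \<Rightarrow> 'a \<Rightarrow> 'a \<Rightarrow> 'a \<Rightarrow> 'a \<Rightarrow> bool" where
  "add_false_twin E v v' x y \<longleftrightarrow>
     E x y \<or> (x = v' \<and> E v y) \<or> (y = v' \<and> E v x)"

end

theory Submission
  imports Defs
begin

definition PR :: "('a \<Rightarrow> 'a option) \<Rightarrow> ('a \<times> 'a) set" where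
  "PR T = {(a,b). T a = Some b}"

lemma desc_PR: "desc T w = {x. (x,w) \<in> (PR T)\<^sup>*}"
  by (simp add: desc_def PR_def)

lemma sv_PR: "single_valued (PR T)"
  by (auto simp: single_valued_def PR_def)

lemma PR_iff[simp]: "(a,b) \<in> PR T \<longleftrightarrow> T a = Some b"
  by (simp add: PR_def)

lemma desc_self[simp]: "w \<in> desc T w"
  by (simp add: desc_PR)

lemma desc_unfold: "desc T z = insert z (\<Union>{desc T c | c. T c = Some z})"
proof -
  have "x \<in> desc T z \<longleftrightarrow> x = z \<or> (\<exists>c. T c = Some z \<and> x \<in> desc T c)" for x
  proof
    assume "x \<in> desc T z"
    then have "(x,z) \<in> (PR T)\<^sup>*" by (simp add: desc_PR)
    then show "x = z \<or> (\<exists>c. T c = Some z \<and> x \<in> desc T c)"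
      by (cases rule: rtranclE) (auto simp: desc_PR)
  next
    assume "x = z \<or> (\<exists>c. T c = Some z \<and> x \<in> desc T c)"
    then show "x \<in> desc T z"
    proof
      assume "\<exists>c. T c = Some z \<and> x \<in> desc T c"
      then obtain c where "T c = Some z" "(x,c) \<in> (PR T)\<^sup>*" by (auto simp: desc_PR)
      then have "(x,z) \<in> (PR T)\<^sup>*" by (meson PR_iff rtrancl.rtrancl_into_rtrancl)
      then show ?thesis by (simp add: desc_PR)
    qed simp
  qed
  then show ?thesis by blast
qed

lemma desc_trans: "b \<in> desc T a \<Longrightarrow> x \<in> desc T b \<Longrightarrow> x \<in> desc T a"
proof -
  assume "b \<in> desc T a" "x \<in> desc T b"
  then have "(b,a) \<in> (PR T)\<^sup>*" "(x,b) \<in> (PR T)\<^sup>*" unfolding desc_PR by auto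
  then have "(x,a) \<in> (PR T)\<^sup>*" using rtrancl_trans by metis
  then show ?thesis unfolding desc_PR by simp
qed

lemma desc_mono: "b \<in> desc T a \<Longrightarrow> desc T b \<subseteq> desc T a"
  using desc_trans[of b T a] by (simp add: subset_iff)

lemma desc_child: "T c = Some z \<Longrightarrow> c \<in> desc T z"
  by (auto simp: desc_PR)

lemma desc_childI: "T c = Some z \<Longrightarrow> x \<in> desc T c \<Longrightarrow> x \<in> desc T z"
  using desc_child[of T c z] desc_trans[of c T z x] by simp

lemma desc_comparable: "x \<in> desc T a \<Longrightarrow> x \<in> desc T b \<Longrightarrow> a \<in> desc T b \<or> b \<in> desc T a"
proof -
  assume "x \<in> desc T a" "x \<in> desc T b"
  then have "(x,a) \<in> (PR T)\<^sup>*" "(x,b) \<in> (PR T)\<^sup>*" by (auto simp: desc_PR)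
  from single_valued_confluent[OF sv_PR this] show ?thesis by (auto simp: desc_PR)
qed

lemma desc_leaf: "(\<forall>c. T c \<noteq> Some z) \<Longrightarrow> desc T z = {z}"
  by (subst desc_unfold) auto

lemma desc_root: "T r = None \<Longrightarrow> r \<in> desc T y \<Longrightarrow> y = r"
proof -
  assume "T r = None" "r \<in> desc T y"
  then have "(r,y) \<in> (PR T)\<^sup>*" by (simp add: desc_PR)
  then show "y = r" using \<open>T r = None\<close> by (cases rule: converse_rtranclE) auto
qed

lemma desc_strict_parent: "T c = Some z \<Longrightarrow> x \<in> desc T y \<Longrightarrow> y \<noteq> x \<Longrightarrow> x = c \<Longrightarrow> T c = Some z"
  by simp

definition acyc :: "('a \<Rightarrow> 'a option) \<Rightarrow> bool" where
  "acyc T \<longleftrightarrow> (\<forall>a. (a,a) \<notin> (PR T)\<^sup>+)"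

lemma on_cycle:
  assumes "(a,a) \<in> (PR T)\<^sup>+" "(a,b) \<in> (PR T)\<^sup>*"
  shows "(b,a) \<in> (PR T)\<^sup>+"
  using assms(2)
proof (induction rule: rtrancl_induct)
  case base then show ?case using assms(1) by simp
next
  case (step b c)
  from step.IH obtain b1 where "(b,b1) \<in> PR T" "(b1,a) \<in> (PR T)\<^sup>*"
    using tranclD by metis
  with step.hyps(2) have "b1 = c" by simp
  then have ca: "(c,a) \<in> (PR T)\<^sup>*" using \<open>(b1,a) \<in> _\<close> by simp
  show ?case
  proof (cases "c = a")
    case True then show ?thesis using assms(1) by simp
  next
    case False then show ?thesis using ca rtranclD by metis
  qed
qed

lemma no_cycle_to_root:
  assumes "T r = None" "x \<in> desc T r"
  shows "(x,x) \<notin> (PR T)\<^sup>+"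
proof
  assume c: "(x,x) \<in> (PR T)\<^sup>+"
  have "(x,r) \<in> (PR T)\<^sup>*" using assms(2) by (simp add: desc_PR)
  from on_cycle[OF c this] have "(r,x) \<in> (PR T)\<^sup>+" .
  then obtain m where "(r,m) \<in> PR T" using tranclD by metis
  then show False using assms(1) by simp
qed

lemma acyc_parent_not_desc:
  assumes "acyc T" "T c = Some z" shows "z \<notin> desc T c"
proof
  assume "z \<in> desc T c"
  then have "(z,c) \<in> (PR T)\<^sup>*" by (simp add: desc_PR)
  moreover have "(c,z) \<in> PR T" using assms(2) by simp
  ultimately have "(z,z) \<in> (PR T)\<^sup>+" by (meson rtrancl_into_trancl1)
  then show False using assms(1) by (simp add: acyc_def)
qed

lemma acyc_antisym:
  assumes "acyc T" "a \<in> desc T b" "b \<in> desc T a" shows "a = b"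
proof (rule ccontr)
  assume "a \<noteq> b"
  have "(a,b) \<in> (PR T)\<^sup>*" "(b,a) \<in> (PR T)\<^sup>*" using assms by (auto simp: desc_PR)
  then have "(a,b) \<in> (PR T)\<^sup>+" using \<open>a \<noteq> b\<close> rtranclD by metis
  then have "(a,a) \<in> (PR T)\<^sup>+" using \<open>(b,a) \<in> _\<close> by (rule trancl_rtrancl_trancl)
  then show False using assms(1) by (simp add: acyc_def)
qed

lemma siblings_disjoint:
  assumes "acyc T" "T c1 = Some z" "T c2 = Some z" "c1 \<noteq> c2"
  shows "desc T c1 \<inter> desc T c2 = {}"
proof (rule ccontr)
  assume "desc T c1 \<inter> desc T c2 \<noteq> {}"
  then obtain x where "x \<in> desc T c1" "x \<in> desc T c2" by blast
  then have "c1 \<in> desc T c2 \<or> c2 \<in> desc T c1" by (rule desc_comparable)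
  then show False
  proof
    assume h: "c1 \<in> desc T c2"
    have "z \<in> desc T c2"
    proof -
      have "(c1,c2) \<in> (PR T)\<^sup>*" using h by (simp add: desc_PR)
      then have "(c1,c2) \<in> (PR T)\<^sup>+" using assms(4) rtranclD by metis
      then obtain m where "(c1,m) \<in> PR T" "(m,c2) \<in> (PR T)\<^sup>*" using tranclD by metis
      then show ?thesis using assms(2) by (simp add: desc_PR)
    qed
    then show False using acyc_parent_not_desc[OF assms(1,3)] by simp
  next
    assume h: "c2 \<in> desc T c1"
    have "z \<in> desc T c1"
    proof -
      have "(c2,c1) \<in> (PR T)\<^sup>*" using h by (simp add: desc_PR)
      then have "(c2,c1) \<in> (PR T)\<^sup>+" using assms(4) rtranclD by metis
      then obtain m where "(c2,m) \<in> PR T" "(m,c1) \<in> (PR T)\<^sup>*" using tranclD by metis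
      then show ?thesis using assms(3) by (simp add: desc_PR)
    qed
    then show False using acyc_parent_not_desc[OF assms(1,2)] by simp
  qed
qed

definition symm :: "('a \<Rightarrow> 'a \<Rightarrow> bool) \<Rightarrow> bool" where
  "symm E \<longleftrightarrow> (\<forall>a b. E a b \<longrightarrow> E b a)"

lemma reach_in_refl[simp]: "reach_in E S x x"
  by (simp add: reach_in_def)

lemma reach_in_step:
  "reach_in E S x y \<Longrightarrow> E y z \<Longrightarrow> y \<in> S \<Longrightarrow> z \<in> S \<Longrightarrow> reach_in E S x z"
  unfolding reach_in_def by (rule rtrancl_into_rtrancl) auto

lemma reach_in_edge: "E y z \<Longrightarrow> y \<in> S \<Longrightarrow> z \<in> S \<Longrightarrow> reach_in E S y z"
  using reach_in_step[of E S y y z] by simp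

lemma reach_in_trans: "reach_in E S x y \<Longrightarrow> reach_in E S y z \<Longrightarrow> reach_in E S x z"
  unfolding reach_in_def using rtrancl_trans by metis

lemma reach_in_mono: assumes "S \<subseteq> S'" "reach_in E S x y" shows "reach_in E S' x y"
proof -
  have "Restr {(a, b). E a b} S \<subseteq> Restr {(a, b). E a b} S'" using assms(1) by auto
  then show ?thesis using assms(2) unfolding reach_in_def by (meson rtrancl_mono subsetD)
qed

lemma reach_in_sym: assumes "symm E" "reach_in E S x y" shows "reach_in E S y x"
proof -
  have "(x,y) \<in> (Restr {(a, b). E a b} S)\<^sup>*" using assms(2) by (simp add: reach_in_def)
  then have "(y,x) \<in> (Restr {(a, b). E a b} S)\<^sup>*"
  proof (induction rule: rtrancl_induct)
    case base then show ?case by simp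
  next
    case (step b c)
    then have "(c,b) \<in> Restr {(a, b). E a b} S" using assms(1) by (auto simp: symm_def)
    then show ?case using step.IH by (meson converse_rtrancl_into_rtrancl)
  qed
  then show ?thesis by (simp add: reach_in_def)
qed

lemma reach_in_closed:
  assumes "reach_in E S x y" "x \<in> C" "\<forall>a\<in>C. \<forall>b\<in>S. a \<in> S \<longrightarrow> E a b \<longrightarrow> b \<in> C"
  shows "y \<in> C"
proof -
  have "(x,y) \<in> (Restr {(a, b). E a b} S)\<^sup>*" using assms(1) by (simp add: reach_in_def)
  then show ?thesis
  proof (induction rule: rtrancl_induct)
    case base then show ?case using assms(2) by simp
  next
    case (step b c) then show ?case using assms(3) by auto
  qed
qed

lemma reach_in_mem: "reach_in E S x y \<Longrightarrow> x \<in> S \<Longrightarrow> y \<in> S"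
  using reach_in_closed[of E S x y S] by auto

lemma comps_sub: "C \<in> comps E X \<Longrightarrow> C \<subseteq> X"
  by (auto simp: comps_def)

lemma comps_mem: "C \<in> comps E X \<Longrightarrow> \<exists>x\<in>X. C = {y \<in> X. reach_in E X x y}"
  by (auto simp: comps_def)

lemma comps_edge:
  assumes "symm E" "C1 \<in> comps E X" "C2 \<in> comps E X" "a \<in> C1" "b \<in> C2" "E a b"
  shows "C1 = C2"
proof -
  obtain x1 where x1: "x1 \<in> X" "C1 = {y \<in> X. reach_in E X x1 y}" using comps_mem[OF assms(2)] by blast
  obtain x2 where x2: "x2 \<in> X" "C2 = {y \<in> X. reach_in E X x2 y}" using comps_mem[OF assms(3)] by blast
  have aX: "a \<in> X" and bX: "b \<in> X" using assms(4,5) x1 x2 by auto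
  have r0: "reach_in E X x1 a" using assms(4) x1 by auto
  have r1: "reach_in E X x1 b" using reach_in_step[OF r0 assms(6) aX bX] .
  have r2: "reach_in E X x2 b" using assms(5) x2 by auto
  have a12: "reach_in E X x1 x2" using reach_in_trans[OF r1 reach_in_sym[OF assms(1) r2]] .
  have a21: "reach_in E X x2 x1" using reach_in_sym[OF assms(1) a12] .
  show ?thesis using x1 x2 reach_in_trans[OF a12] reach_in_trans[OF a21] by blast
qed

lemma conn_reach: "conn E C \<Longrightarrow> x \<in> C \<Longrightarrow> y \<in> C \<Longrightarrow> reach_in E C x y"
  by (simp add: conn_def)

lemma comps_eqI:
  assumes X: "X = \<Union>P"
    and cn: "\<forall>C\<in>P. conn E C"
    and sep: "\<forall>C1\<in>P. \<forall>C2\<in>P. C1 \<noteq> C2 \<longrightarrow> C1 \<inter> C2 = {} \<and> (\<forall>a\<in>C1. \<forall>b\<in>C2. \<not> E a b)"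
  shows "comps E X = P"
proof -
  have key: "{y \<in> X. reach_in E X x y} = C" if "C \<in> P" "x \<in> C" for C x
  proof
    show "C \<subseteq> {y \<in> X. reach_in E X x y}"
    proof
      fix y assume "y \<in> C"
      have cC: "conn E C" using cn that(1) by blast
      have "reach_in E C x y" using conn_reach[OF cC that(2) \<open>y \<in> C\<close>] .
      moreover have CX: "C \<subseteq> X" using X that(1) by auto
      ultimately have "reach_in E X x y" using reach_in_mono[OF CX] by blast
      then show "y \<in> {y \<in> X. reach_in E X x y}" using CX \<open>y \<in> C\<close> by blast
    qed
  next
    show "{y \<in> X. reach_in E X x y} \<subseteq> C"
    proof
      fix y assume "y \<in> {y \<in> X. reach_in E X x y}"
      then have "reach_in E X x y" by simp
      moreover have "\<forall>a\<in>C. \<forall>b\<in>X. a \<in> X \<longrightarrow> E a b \<longrightarrow> b \<in> C"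
      proof (intro ballI impI)
        fix a b assume "a \<in> C" "b \<in> X" "a \<in> X" "E a b"
        then obtain C' where "C' \<in> P" "b \<in> C'" using X by auto
        show "b \<in> C"
        proof (rule ccontr)
          assume "b \<notin> C"
          then have "C' \<noteq> C" using \<open>b \<in> C'\<close> by blast
          then have "\<forall>a\<in>C. \<forall>b\<in>C'. \<not> E a b" using sep \<open>C' \<in> P\<close> that(1) by blast
          then show False using \<open>a \<in> C\<close> \<open>b \<in> C'\<close> \<open>E a b\<close> by blast
        qed
      qed
      ultimately show "y \<in> C" using reach_in_closed[of E X x y C] that(2) by blast
    qed
  qed
  show ?thesis
  proof
    show "comps E X \<subseteq> P"
    proof
      fix C assume "C \<in> comps E X"
      then obtain x where "x \<in> X" "C = {y \<in> X. reach_in E X x y}" using comps_mem by blast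
      then obtain C' where "C' \<in> P" "x \<in> C'" using X by auto
      then show "C \<in> P" using key \<open>C = _\<close> by auto
    qed
  next
    show "P \<subseteq> comps E X"
    proof
      fix C assume "C \<in> P"
      then have "C \<noteq> {}" using cn by (auto simp: conn_def)
      then obtain x where "x \<in> C" by blast
      then have "x \<in> X" using X \<open>C \<in> P\<close> by auto
      then show "C \<in> comps E X" using key[OF \<open>C \<in> P\<close> \<open>x \<in> C\<close>] unfolding comps_def by blast
    qed
  qed
qed

lemma conn_star:
  assumes "symm E" "\<forall>C\<in>P. conn E C \<and> (\<exists>c\<in>C. E r c)"
  shows "conn E (insert r (\<Union>P))"
proof -
  let ?S = "insert r (\<Union>P)"
  have rr: "reach_in E ?S r y" if "y \<in> ?S" for y
  proof (cases "y = r")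
    case True then show ?thesis by simp
  next
    case False
    have "y \<in> \<Union>P" using False that by simp
    then obtain C where C: "C \<in> P" "y \<in> C" by blast
    then obtain c where c: "c \<in> C" "E r c" using assms(2) by blast
    have cC: "conn E C" using assms(2) C(1) by blast
    have "reach_in E C c y" using conn_reach[OF cC c(1) C(2)] .
    moreover have CS: "C \<subseteq> ?S" using C by blast
    ultimately have r1: "reach_in E ?S c y" using reach_in_mono[OF CS] by blast
    have r2: "reach_in E ?S r c" using c C by (intro reach_in_edge) auto
    show ?thesis using reach_in_trans[OF r2 r1] .
  qed
  show ?thesis unfolding conn_def
  proof (intro conjI ballI)
    show "?S \<noteq> {}" by simp
    fix x y assume "x \<in> ?S" "y \<in> ?S"
    then show "reach_in E ?S x y" using reach_in_trans[OF reach_in_sym[OF assms(1) rr[of x]] rr[of y]] by blast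
  qed
qed

lemma conn_singleton: "conn E {x}"
  by (simp add: conn_def)

definition tree_ok :: "'a set \<Rightarrow> ('a \<Rightarrow> 'a \<Rightarrow> bool) \<Rightarrow> ('a \<Rightarrow> 'a option) \<Rightarrow> bool" where
  "tree_ok S E T \<longleftrightarrow> finite S \<and> (\<forall>a. a \<notin> S \<longrightarrow> T a = None) \<and> (\<forall>a b. T a = Some b \<longrightarrow> b \<in> S)
     \<and> (\<exists>r\<in>S. T r = None \<and> desc T r = S) \<and> (\<forall>z\<in>S. conn E (desc T z))
     \<and> (\<forall>a\<in>S. \<forall>b\<in>S. E a b \<longrightarrow> a \<in> desc T b \<or> b \<in> desc T a)"

lemma tree_okD:
  assumes "tree_ok S E T"
  shows "finite S" "\<And>a. a \<notin> S \<Longrightarrow> T a = None" "\<And>a b. T a = Some b \<Longrightarrow> b \<in> S"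
    "\<exists>r\<in>S. T r = None \<and> desc T r = S" "\<And>z. z \<in> S \<Longrightarrow> conn E (desc T z)"
    "\<And>a b. a \<in> S \<Longrightarrow> b \<in> S \<Longrightarrow> E a b \<Longrightarrow> a \<in> desc T b \<or> b \<in> desc T a"
  using assms unfolding tree_ok_def by blast+

lemma tree_okI:
  assumes "finite S" "\<And>a. a \<notin> S \<Longrightarrow> T a = None" "\<And>a b. T a = Some b \<Longrightarrow> b \<in> S"
    "r \<in> S" "T r = None" "desc T r = S" "\<And>z. z \<in> S \<Longrightarrow> conn E (desc T z)"
    "\<And>a b. a \<in> S \<Longrightarrow> b \<in> S \<Longrightarrow> E a b \<Longrightarrow> a \<in> desc T b \<or> b \<in> desc T a"
  shows "tree_ok S E T"
  unfolding tree_ok_def using assms by blast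

lemma st_props:
  assumes "st E T S r" "symm E"
  shows "r \<in> S \<and> desc T r = S \<and> conn E S \<and> (\<forall>z\<in>S. conn E (desc T z))
    \<and> (\<forall>a\<in>S. \<forall>b\<in>S. E a b \<longrightarrow> a \<in> desc T b \<or> b \<in> desc T a)
    \<and> (\<forall>a\<in>S. \<forall>b. T a = Some b \<longrightarrow> b \<in> S \<or> a = r)"
  using assms(1)
proof (induction rule: st.induct)
  case (1 r S)
  note rS = 1(1) and cS = 1(2) and dS = 1(3) and bij = 1(4) and IH0 = 1(5)
  have dsub: "desc T c \<subseteq> S - {r}" if "T c = Some r" for c
  proof -
    have "c \<in> {c. T c = Some r}" using that by simp
    then have "desc T c \<in> comps E (S - {r})" using bij unfolding bij_betw_def by blast
    then show ?thesis by (rule comps_sub)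
  qed
  have cover: "\<exists>c. T c = Some r \<and> z \<in> desc T c" if "z \<in> S" "z \<noteq> r" for z
  proof -
    have "z \<in> desc T r" using dS that(1) by simp
    then have "z \<in> insert r (\<Union>{desc T c | c. T c = Some r})" by (simp only: desc_unfold[symmetric])
    then show ?thesis using that(2) by auto
  qed
  have IH: "desc T c \<subseteq> S \<and> (\<forall>z\<in>desc T c. conn E (desc T z))
    \<and> (\<forall>a\<in>desc T c. \<forall>b\<in>desc T c. E a b \<longrightarrow> a \<in> desc T b \<or> b \<in> desc T a)
    \<and> (\<forall>a\<in>desc T c. \<forall>b. T a = Some b \<longrightarrow> b \<in> desc T c \<or> a = c)" if "T c = Some r" for c
  proof -
    have "st E T (desc T c) c \<and> (c \<in> desc T c \<and> desc T c = desc T c \<and> conn E (desc T c) \<and> (\<forall>z\<in>desc T c. conn E (desc T z))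
    \<and> (\<forall>a\<in>desc T c. \<forall>b\<in>desc T c. E a b \<longrightarrow> a \<in> desc T b \<or> b \<in> desc T a)
    \<and> (\<forall>a\<in>desc T c. \<forall>b. T a = Some b \<longrightarrow> b \<in> desc T c \<or> a = c))"
      using IH0 that by simp
    then show ?thesis using dsub[OF that] by auto
  qed
  have P1: "\<forall>z\<in>S. conn E (desc T z)"
  proof
    fix z assume "z \<in> S"
    show "conn E (desc T z)"
    proof (cases "z = r")
      case True then show ?thesis using cS dS by simp
    next
      case False
      then obtain c where "T c = Some r" "z \<in> desc T c" using cover \<open>z \<in> S\<close> by blast
      then show ?thesis using IH by blast
    qed
  qed
  have P2: "\<forall>a\<in>S. \<forall>b\<in>S. E a b \<longrightarrow> a \<in> desc T b \<or> b \<in> desc T a"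
  proof (intro ballI impI)
    fix a b assume ab: "a \<in> S" "b \<in> S" "E a b"
    show "a \<in> desc T b \<or> b \<in> desc T a"
    proof (cases "a = r \<or> b = r")
      case True then show ?thesis using dS ab(1,2) by auto
    next
      case False
      obtain c1 where c1: "T c1 = Some r" "a \<in> desc T c1" using cover ab(1) False by blast
      obtain c2 where c2: "T c2 = Some r" "b \<in> desc T c2" using cover ab(2) False by blast
      have m1: "desc T c1 \<in> comps E (S - {r})" using bij c1(1) unfolding bij_betw_def by blast
      have m2: "desc T c2 \<in> comps E (S - {r})" using bij c2(1) unfolding bij_betw_def by blast
      have "desc T c1 = desc T c2" using comps_edge[OF assms(2) m1 m2 c1(2) c2(2) ab(3)] .
      then have "c1 = c2" using bij c1(1) c2(1) unfolding bij_betw_def inj_on_def by blast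
      then have "b \<in> desc T c1" using c2 by simp
      then show ?thesis using IH[OF c1(1)] c1(2) ab(3) by blast
    qed
  qed
  have P3: "\<forall>a\<in>S. \<forall>b. T a = Some b \<longrightarrow> b \<in> S \<or> a = r"
  proof (intro ballI allI impI)
    fix a b assume "a \<in> S" "T a = Some b"
    show "b \<in> S \<or> a = r"
    proof (cases "a = r")
      case False
      then obtain c where c: "T c = Some r" "a \<in> desc T c" using cover \<open>a \<in> S\<close> by blast
      then have "b \<in> desc T c \<or> a = c" using IH[OF c(1)] \<open>T a = Some b\<close> by blast
      then show ?thesis
      proof
        assume "b \<in> desc T c" then show ?thesis using IH[OF c(1)] by blast
      next
        assume "a = c" then show ?thesis using c(1) \<open>T a = Some b\<close> rS by auto
      qed
    qed simp
  qed
  show ?case using rS dS cS P1 P2 P3 by blast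
qed

lemma search_tree_ok:
  assumes "finite S" "symm E" "search_tree S E T"
  shows "tree_ok S E T"
proof -
  obtain r where r: "T r = None" "st E T S r" and out: "\<forall>x. x \<notin> S \<longrightarrow> T x = None"
    using assms(3) by (auto simp: search_tree_def)
  note P = st_props[OF r(2) assms(2)]
  have "\<forall>a b. T a = Some b \<longrightarrow> b \<in> S"
  proof (intro allI impI)
    fix a b assume h: "T a = Some b"
    then have "a \<in> S" using out by force
    then have "b \<in> S \<or> a = r" using P h by blast
    then show "b \<in> S" using r(1) h by auto
  qed
  then show ?thesis unfolding tree_ok_def using assms(1) out P r(1) by blast
qed

lemma ok_acyc: assumes "tree_ok S E T" shows "acyc T"
proof -
  obtain r where r: "r \<in> S" "T r = None" "desc T r = S" using assms by (auto simp: tree_ok_def)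
  have "(a,a) \<notin> (PR T)\<^sup>+" for a
  proof (cases "a \<in> S")
    case True then show ?thesis using no_cycle_to_root[of T r a, OF r(2)] r(3) by blast
  next
    case False
    then have "T a = None" using assms by (auto simp: tree_ok_def)
    show ?thesis
    proof
      assume "(a,a) \<in> (PR T)\<^sup>+"
      then obtain m where "(a,m) \<in> PR T" using tranclD by metis
      then show False using \<open>T a = None\<close> by simp
    qed
  qed
  then show ?thesis by (simp add: acyc_def)
qed

lemma ok_desc_sub: assumes "tree_ok S E T" "z \<in> S" shows "desc T z \<subseteq> S"
proof -
  obtain r where r: "r \<in> S" "T r = None" "desc T r = S" using assms by (auto simp: tree_ok_def)
  then show ?thesis using desc_mono[of z T r] assms(2) by simp
qed

lemma ok_st:
  assumes ok: "tree_ok S E T" and "z \<in> S"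
  shows "st E T (desc T z) z"
proof -
  have fin: "finite S" using ok by (simp add: tree_ok_def)
  have ac: "acyc T" using ok_acyc[OF ok] .
  have "\<forall>z. z \<in> S \<longrightarrow> card (desc T z) = n \<longrightarrow> st E T (desc T z) z" for n
  proof (induction n rule: less_induct)
    case (less n)
    show ?case
    proof (intro allI impI)
      fix z assume zS: "z \<in> S" and cn: "card (desc T z) = n"
      let ?Ch = "{c. T c = Some z}"
      have dzS: "desc T z \<subseteq> S" using ok_desc_sub[OF ok zS] .
      have chS: "c \<in> S" if "T c = Some z" for c
        using ok that by (auto simp: tree_ok_def)
      have strict: "desc T c \<subset> desc T z" if "T c = Some z" for c
      proof -
        have "desc T c \<subseteq> desc T z" using desc_mono[OF desc_child[of T c z, OF that]] .
        moreover have "z \<notin> desc T c" using acyc_parent_not_desc[OF ac that] .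
        ultimately show ?thesis by auto
      qed
      have subst: "st E T (desc T c) c" if "T c = Some z" for c
      proof -
        have "finite (desc T z)" using dzS fin finite_subset by blast
        then have "card (desc T c) < n" using strict[OF that] cn psubset_card_mono by blast
        then show ?thesis using less chS[OF that] by blast
      qed
      have connd: "conn E (desc T y)" if "y \<in> S" for y using ok that by (simp add: tree_ok_def)
      have X: "desc T z - {z} = \<Union>(desc T ` ?Ch)"
      proof -
        have "z \<notin> desc T c" if "T c = Some z" for c using acyc_parent_not_desc[OF ac that] .
        then show ?thesis using desc_unfold[of T z] by blast
      qed
      have disj: "desc T c1 \<inter> desc T c2 = {}" if "T c1 = Some z" "T c2 = Some z" "c1 \<noteq> c2" for c1 c2
        using siblings_disjoint[OF ac that] .
      have comps_eq: "comps E (desc T z - {z}) = desc T ` ?Ch"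
      proof (rule comps_eqI[OF X])
        show "\<forall>C\<in>desc T ` ?Ch. conn E C" using connd chS by blast
        show "\<forall>C1\<in>desc T ` ?Ch. \<forall>C2\<in>desc T ` ?Ch. C1 \<noteq> C2 \<longrightarrow> C1 \<inter> C2 = {} \<and> (\<forall>a\<in>C1. \<forall>b\<in>C2. \<not> E a b)"
        proof (intro ballI impI)
          fix C1 C2 assume "C1 \<in> desc T ` ?Ch" "C2 \<in> desc T ` ?Ch" "C1 \<noteq> C2"
          then obtain c1 c2 where c: "T c1 = Some z" "T c2 = Some z" "C1 = desc T c1" "C2 = desc T c2" "c1 \<noteq> c2"
            by auto
          have d: "C1 \<inter> C2 = {}" using disj c by blast
          have "\<not> E a b" if "a \<in> C1" "b \<in> C2" for a b
          proof
            assume "E a b"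
            have aS: "a \<in> S" and bS: "b \<in> S" using that c chS ok_desc_sub[OF ok] by blast+
            then have "a \<in> desc T b \<or> b \<in> desc T a" using ok \<open>E a b\<close> by (simp add: tree_ok_def)
            then show False
            proof
              assume "a \<in> desc T b"
              then have "a \<in> C2" using desc_trans[of b T c2 a] that c by blast
              then show False using d that by blast
            next
              assume "b \<in> desc T a"
              then have "b \<in> C1" using desc_trans[of a T c1 b] that c by blast
              then show False using d that by blast
            qed
          qed
          then show "C1 \<inter> C2 = {} \<and> (\<forall>a\<in>C1. \<forall>b\<in>C2. \<not> E a b)" using d by blast
        qed
      qed
      have inj: "inj_on (desc T) ?Ch"
      proof (rule inj_onI)
        fix c1 c2 assume "c1 \<in> ?Ch" "c2 \<in> ?Ch" "desc T c1 = desc T c2"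
        then show "c1 = c2" using disj[of c1 c2] desc_self[of c1 T] by blast
      qed
      have bij: "bij_betw (desc T) ?Ch (comps E (desc T z - {z}))"
        unfolding bij_betw_def using inj comps_eq by simp
      show "st E T (desc T z) z"
        by (rule st.intros) (auto simp: connd zS bij subst)
    qed
  qed
  then show ?thesis using assms(2) by blast
qed

lemma ok_search_tree:
  assumes "tree_ok S E T" shows "search_tree S E T"
proof -
  obtain r where r: "r \<in> S" "T r = None" "desc T r = S" using assms by (auto simp: tree_ok_def)
  have "st E T S r" using ok_st[OF assms r(1)] r(3) by simp
  then show ?thesis unfolding search_tree_def using r assms by (auto simp: tree_ok_def)
qed

lemma search_tree_iff:
  assumes "finite S" "symm E" shows "search_tree S E T \<longleftrightarrow> tree_ok S E T"
  using search_tree_ok[OF assms] ok_search_tree by blast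

definition add_top :: "'a set \<Rightarrow> 'a \<Rightarrow> ('a \<Rightarrow> 'a option) \<Rightarrow> ('a \<Rightarrow> 'a option)" where
  "add_top S a T = (\<lambda>z. if z \<in> S \<and> T z = None then Some a else T z)"

lemma desc_eq_extra:
  assumes "\<forall>y. T' y \<noteq> T y \<longrightarrow> T y = None \<and> T' y = Some a" "T' a = None" "z \<noteq> a"
  shows "desc T' z = desc T z"
proof
  have "PR T \<subseteq> PR T'" using assms(1) by (auto simp: PR_def) (metis option.distinct(1))
  then show "desc T z \<subseteq> desc T' z" unfolding desc_PR using rtrancl_mono by blast
next
  show "desc T' z \<subseteq> desc T z"
  proof
    fix x assume "x \<in> desc T' z"
    then have "(x,z) \<in> (PR T')\<^sup>*" by (simp add: desc_PR)
    then have "(x,z) \<in> (PR T)\<^sup>*"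
    proof (induction rule: converse_rtrancl_induct)
      case base then show ?case by simp
    next
      case (step x y)
      show ?case
      proof (cases "T' x = T x")
        case True
        then have "(x,y) \<in> PR T" using step.hyps(1) by simp
        then show ?thesis using step.IH by (rule converse_rtrancl_into_rtrancl)
      next
        case False
        then have "T' x = Some a" using assms(1) by blast
        then have "y = a" using step.hyps(1) by simp
        then have "(a,z) \<in> (PR T')\<^sup>*" using step.hyps(2) by simp
        then show ?thesis using assms(2,3) by (cases rule: converse_rtranclE) auto
      qed
    qed
    then show "x \<in> desc T z" by (simp add: desc_PR)
  qed
qed

lemma ok_root_unique:
  assumes "tree_ok S F T" "z \<in> S" "T z = None" "r \<in> S" "T r = None" "desc T r = S"
  shows "z = r"
  using desc_root[of T z r] assms by simp

lemma add_top_ok: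
  assumes ok: "tree_ok S F T" and aS: "a \<notin> S" and sy: "symm F" and adj: "\<exists>s\<in>S. F a s"
  shows "tree_ok (insert a S) F (add_top S a T)"
proof -
  let ?T = "add_top S a T"
  note okD = tree_okD[OF ok]
  obtain r where r: "r \<in> S" "T r = None" "desc T r = S" using okD(4) by blast
  have Ta: "T a = None" using okD(2) aS by blast
  have T'a: "?T a = None" using Ta aS by (simp add: add_top_def)
  have diff: "\<forall>y. ?T y \<noteq> T y \<longrightarrow> T y = None \<and> ?T y = Some a" by (simp add: add_top_def)
  have dz: "desc ?T z = desc T z" if "z \<in> S" for z
  proof -
    have "z \<noteq> a" using that aS by auto
    then show ?thesis using desc_eq_extra[OF diff T'a] by blast
  qed
  have chil: "?T c = Some a \<longleftrightarrow> c = r" for c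
  proof
    assume h: "?T c = Some a"
    show "c = r"
    proof (cases "c \<in> S \<and> T c = None")
      case True then show ?thesis using ok_root_unique[OF ok _ _ r] by blast
    next
      case False
      then have "T c = Some a" using h unfolding add_top_def by presburger
      then have "a \<in> S" using okD(3) by blast
      then show ?thesis using aS by simp
    qed
  next
    assume "c = r" then show "?T c = Some a" using r by (simp add: add_top_def)
  qed
  have da: "desc ?T a = insert a S"
  proof -
    have "desc ?T a = insert a (\<Union>{desc ?T c | c. ?T c = Some a})" by (rule desc_unfold)
    also have "{desc ?T c | c. ?T c = Some a} = {desc ?T r}"
    proof -
      have "{desc ?T c | c. ?T c = Some a} = {desc ?T c | c. c = r}" by (simp only: chil)
      then show ?thesis by simp
    qed
    finally show ?thesis using dz[OF r(1)] r(3) by simp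
  qed
  have out: "?T z = None" if "z \<notin> insert a S" for z
    using okD(2) that by (simp add: add_top_def)
  have par: "b \<in> insert a S" if "?T x = Some b" for x b
  proof (cases "x \<in> S \<and> T x = None")
    case True then show ?thesis using that by (simp add: add_top_def)
  next
    case False then have "T x = Some b" using that unfolding add_top_def by presburger
    then show ?thesis using okD(3) by blast
  qed
  have "conn F (desc T r)" using okD(5) r(1) by blast
  then have cS: "conn F S" using r(3) by simp
  have cn: "conn F (desc ?T z)" if "z \<in> insert a S" for z
  proof (cases "z = a")
    case True
    have "\<forall>C\<in>{S}. conn F C \<and> (\<exists>c\<in>C. F a c)" using cS adj by simp
    then have "conn F (insert a (\<Union>{S}))" by (rule conn_star[OF sy])
    then show ?thesis using da True by simp
  next
    case False then have "z \<in> S" using that by simp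
    then show ?thesis using dz okD(5) by simp
  qed
  have ed: "x \<in> desc ?T y \<or> y \<in> desc ?T x" if xy: "x \<in> insert a S" "y \<in> insert a S" "F x y" for x y
  proof (cases "x = a \<or> y = a")
    case True then show ?thesis using da xy by auto
  next
    case False
    then have "x \<in> S" "y \<in> S" using xy by auto
    then show ?thesis using okD(6)[OF _ _ xy(3)] dz by simp
  qed
  have fin: "finite (insert a S)" using okD(1) by simp
  show ?thesis
    apply (rule tree_okI[where r=a])
           apply (rule fin)
          apply (erule out)
         apply (erule par)
        apply simp
       apply (rule T'a)
      apply (rule da)
     apply (erule cn)
    apply (erule (2) ed)
    done
qed

locale twin =
  fixes V :: "'a set" and E :: "'a \<Rightarrow> 'a \<Rightarrow> bool" and v v' :: 'a
  assumes gr: "graph V E" and cV: "conn E V" and nc: "\<exists>x\<in>V. \<exists>y\<in>V. x \<noteq> y \<and> \<not> E x y"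
    and vV: "v \<in> V" and univ: "\<forall>x\<in>V. x \<noteq> v \<longrightarrow> E v x" and v'V: "v' \<notin> V"
begin

definition Et where "Et = add_false_twin E v v'"
definition Vt where "Vt = insert v' V"
definition sw :: "'a \<Rightarrow> 'a" where "sw z = (if z = v then v' else if z = v' then v else z)"

lemma finV: "finite V" using gr unfolding graph_def by (rule conjunct1)
lemma finVt: "finite Vt" using finV by (simp add: Vt_def)

lemma Egr: "E a b \<Longrightarrow> a \<in> V \<and> b \<in> V \<and> a \<noteq> b \<and> E b a"
proof -
  assume h: "E a b"
  have "\<forall>x y. E x y \<longrightarrow> x \<in> V \<and> y \<in> V \<and> x \<noteq> y \<and> E y x"
    using gr unfolding graph_def by (rule conjunct2)
  from this[rule_format, OF h] show ?thesis .
qed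

lemma vv': "v \<noteq> v'" using vV v'V by auto

lemma E_in1: "E a b \<Longrightarrow> a \<in> V" using Egr by blast
lemma E_in2: "E a b \<Longrightarrow> b \<in> V" using Egr by blast
lemma E_irr[simp]: "\<not> E a a" using Egr by blast
lemma E_sym: "E a b \<Longrightarrow> E b a" using Egr by blast
lemma E_v'[simp]: "\<not> E v' b" "\<not> E b v'" using E_in1 E_in2 v'V by blast+

lemma Ev_iff: "E v b \<longleftrightarrow> b \<in> V \<and> b \<noteq> v"
  using univ E_in2 E_irr by blast

lemma Ev_iff2: "E b v \<longleftrightarrow> b \<in> V \<and> b \<noteq> v"
  using Ev_iff E_sym by blast

lemma Et_iff: "Et a b \<longleftrightarrow> E a b \<or> (a = v' \<and> E v b) \<or> (b = v' \<and> E v a)"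
  by (simp add: Et_def add_false_twin_def)

lemma Et_V: "a \<in> V \<Longrightarrow> b \<in> V \<Longrightarrow> Et a b = E a b"
  using v'V by (auto simp: Et_iff)

lemma Et_v'L: "Et v' b \<longleftrightarrow> b \<in> V \<and> b \<noteq> v"
  using v'V vv' by (auto simp: Et_iff Ev_iff)

lemma Et_v'R: "Et b v' \<longleftrightarrow> b \<in> V \<and> b \<noteq> v"
  using v'V vv' by (auto simp: Et_iff Ev_iff)

lemma Et_vL: "Et v b \<longleftrightarrow> b \<in> V \<and> b \<noteq> v"
  using v'V vv' by (auto simp: Et_iff Ev_iff)

lemma Et_vR: "Et b v \<longleftrightarrow> b \<in> V \<and> b \<noteq> v"
  using v'V vv' by (auto simp: Et_iff Ev_iff Ev_iff2)

lemma symmE: "symm E" using E_sym by (auto simp: symm_def)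
lemma symmEt: "symm Et" using E_sym by (auto simp: symm_def Et_iff)

lemma Et_sym: "Et a b \<Longrightarrow> Et b a" using symmEt by (simp add: symm_def)

lemma Et_in: "Et a b \<Longrightarrow> a \<in> Vt \<and> b \<in> Vt \<and> a \<noteq> b"
  using vv' v'V E_in1 E_in2 by (auto simp: Et_iff Vt_def Ev_iff)

lemma Et_irr[simp]: "\<not> Et a a" using Et_in by blast

lemma sw_sw[simp]: "sw (sw z) = z" by (simp add: sw_def)
lemma sw_v[simp]: "sw v = v'" by (simp add: sw_def)
lemma sw_v'[simp]: "sw v' = v" using vv' by (simp add: sw_def)
lemma sw_other[simp]: "z \<noteq> v \<Longrightarrow> z \<noteq> v' \<Longrightarrow> sw z = z" by (simp add: sw_def)
lemma sw_inj: "sw a = sw b \<longleftrightarrow> a = b" by (metis sw_sw)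

lemma Et_sw: "Et (sw a) (sw b) = Et a b"
  unfolding sw_def using vv' v'V by (auto simp: Et_v'L Et_vL Et_v'R Et_vR)

lemma sw_Vt: "z \<in> Vt \<longleftrightarrow> sw z \<in> Vt"
  using vV by (auto simp: Vt_def sw_def)

lemma reach_in_E_Et: "X \<subseteq> V \<Longrightarrow> reach_in E X = reach_in Et X"
proof -
  assume "X \<subseteq> V"
  then have "Restr {(a, b). E a b} X = Restr {(a, b). Et a b} X"
  proof (intro set_eqI iffI)
    fix p assume "p \<in> Restr {(a, b). E a b} X"
    then show "p \<in> Restr {(a, b). Et a b} X" using Et_V \<open>X \<subseteq> V\<close> by blast
  next
    fix p assume "p \<in> Restr {(a, b). Et a b} X"
    then show "p \<in> Restr {(a, b). E a b} X" using Et_V \<open>X \<subseteq> V\<close> by blast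
  qed
  then show ?thesis unfolding reach_in_def by (intro ext) simp
qed

lemma conn_E_Et: "X \<subseteq> V \<Longrightarrow> conn E X = conn Et X"
  unfolding conn_def by (simp only: reach_in_E_Et)

lemma ok_E_Et1:
  assumes "tree_ok V E T" shows "tree_ok V Et T"
proof -
  note d = tree_okD[OF assms]
  obtain r where r: "r \<in> V" "T r = None" "desc T r = V" using d(4) by blast
  show ?thesis
  proof (rule tree_okI[OF d(1) d(2) d(3) r])
    fix z assume "z \<in> V"
    then show "conn Et (desc T z)" using d(5) conn_E_Et ok_desc_sub[OF assms] by blast
  next
    fix a b assume "a \<in> V" "b \<in> V" "Et a b"
    then show "a \<in> desc T b \<or> b \<in> desc T a" using d(6) Et_V by blast
  qed
qed

lemma ok_E_Et2:
  assumes "tree_ok V Et T" shows "tree_ok V E T"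
proof -
  note d = tree_okD[OF assms]
  obtain r where r: "r \<in> V" "T r = None" "desc T r = V" using d(4) by blast
  show ?thesis
  proof (rule tree_okI[OF d(1) d(2) d(3) r])
    fix z assume "z \<in> V"
    then show "conn E (desc T z)" using d(5) conn_E_Et ok_desc_sub[OF assms] by blast
  next
    fix a b assume "a \<in> V" "b \<in> V" "E a b"
    then show "a \<in> desc T b \<or> b \<in> desc T a" using d(6) Et_V by blast
  qed
qed

lemma ok_E_Et: "tree_ok V E T \<longleftrightarrow> tree_ok V Et T"
  using ok_E_Et1 ok_E_Et2 by blast

lemma st_E: "search_tree V E T \<longleftrightarrow> tree_ok V Et T"
  using search_tree_iff[OF finV symmE] ok_E_Et by simp

lemma st_Et: "search_tree Vt Et T \<longleftrightarrow> tree_ok Vt Et T"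
  using search_tree_iff[OF finVt symmEt] by simp

lemma A_ne: "\<exists>a\<in>V. a \<noteq> v"
proof -
  obtain x y where "x \<in> V" "y \<in> V" "x \<noteq> y" using nc by blast
  then show ?thesis by (cases "x = v") auto
qed

definition ext :: "('a \<Rightarrow> 'a option) \<Rightarrow> ('a \<Rightarrow> 'a option)" where
  "ext T = add_top V v' T"

lemma ext_ok: "tree_ok V Et T \<Longrightarrow> tree_ok Vt Et (ext T)"
  unfolding ext_def Vt_def
  using add_top_ok[OF _ v'V symmEt] A_ne Et_v'L by blast

end

lemma rt_tr: "(a,b) \<in> r\<^sup>* \<Longrightarrow> a \<noteq> b \<Longrightarrow> (a,b) \<in> r\<^sup>+"
  by (auto dest: rtranclD)

lemma rot_cases:
  "rotate F T u w x = (if x = w then T u else if x = u then Some w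
     else if T x = Some w \<and> (\<exists>y\<in>desc T x. F u y) then Some u else T x)"
  by (simp add: rotate_def)

lemma rot_desc_other:
  assumes wu: "T w = Some u" and uw: "u \<noteq> w" and zu: "z \<noteq> u" and zw: "z \<noteq> w"
  shows "desc (rotate F T u w) z = desc T z"
proof -
  let ?T = "rotate F T u w"
  have Tu: "?T u = Some w" using uw by (simp add: rot_cases)
  have Tw: "?T w = T u" by (simp add: rot_cases)
  have Tx: "?T x = T x \<or> (T x = Some w \<and> ?T x = Some u)" if "x \<noteq> u" "x \<noteq> w" for x
    using that by (simp add: rot_cases)
  have A: "(x,z) \<in> (PR ?T)\<^sup>*" if "(x,z) \<in> (PR T)\<^sup>*" for x
    using that
  proof (induction rule: converse_rtrancl_induct)
    case base then show ?case by simp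
  next
    case (step x y)
    then have Txy: "T x = Some y" by simp
    show ?case
    proof (cases "x = u")
      case True
      have "(w,y) \<in> PR ?T" using Tw True Txy by simp
      then have "(w,z) \<in> (PR ?T)\<^sup>*" using step.IH by (rule converse_rtrancl_into_rtrancl)
      moreover have "(u,w) \<in> PR ?T" using Tu by simp
      ultimately show ?thesis using True by (meson converse_rtrancl_into_rtrancl)
    next
      case xu: False
      show ?thesis
      proof (cases "x = w")
        case True
        then have "y = u" using Txy wu by simp
        then have "(u,z) \<in> (PR ?T)\<^sup>*" using step.IH by simp
        then have "(u,z) \<in> (PR ?T)\<^sup>+" using zu by (intro rt_tr) auto
        then obtain m where "(u,m) \<in> PR ?T" "(m,z) \<in> (PR ?T)\<^sup>*" using tranclD by metis
        then have "m = w" using Tu by simp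
        then show ?thesis using True \<open>(m,z) \<in> _\<close> by simp
      next
        case xw: False
        from Tx[OF xu xw] show ?thesis
        proof
          assume "?T x = T x"
          then have "(x,y) \<in> PR ?T" using Txy by simp
          then show ?thesis using step.IH by (rule converse_rtrancl_into_rtrancl)
        next
          assume h: "T x = Some w \<and> ?T x = Some u"
          then have "y = w" using Txy by simp
          have "(u,w) \<in> PR ?T" using Tu by simp
          then have "(u,z) \<in> (PR ?T)\<^sup>*" using step.IH \<open>y = w\<close> by (meson converse_rtrancl_into_rtrancl)
          moreover have "(x,u) \<in> PR ?T" using h by simp
          ultimately show ?thesis by (meson converse_rtrancl_into_rtrancl)
        qed
      qed
    qed
  qed
  have B: "(x,z) \<in> (PR T)\<^sup>*" if "(x,z) \<in> (PR ?T)\<^sup>*" for x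
    using that
  proof (induction rule: converse_rtrancl_induct)
    case base then show ?case by simp
  next
    case (step x y)
    then have Txy: "?T x = Some y" by simp
    show ?case
    proof (cases "x = u")
      case True
      then have "y = w" using Txy Tu by simp
      then have "(w,z) \<in> (PR T)\<^sup>+" using step.IH zw by (intro rt_tr) auto
      then obtain m where "(w,m) \<in> PR T" "(m,z) \<in> (PR T)\<^sup>*" using tranclD by metis
      then have "m = u" using wu by simp
      then show ?thesis using True \<open>(m,z) \<in> _\<close> by simp
    next
      case xu: False
      show ?thesis
      proof (cases "x = w")
        case True
        then have "T u = Some y" using Txy Tw by simp
        then have "(u,z) \<in> (PR T)\<^sup>*" using step.IH by (meson PR_iff converse_rtrancl_into_rtrancl)
        then show ?thesis using True wu by (meson PR_iff converse_rtrancl_into_rtrancl)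
      next
        case xw: False
        from Tx[OF xu xw] show ?thesis
        proof
          assume "?T x = T x"
          then have "(x,y) \<in> PR T" using Txy by simp
          then show ?thesis using step.IH by (rule converse_rtrancl_into_rtrancl)
        next
          assume h: "T x = Some w \<and> ?T x = Some u"
          then have "y = u" using Txy by simp
          then have "(w,z) \<in> (PR T)\<^sup>*" using step.IH wu by (meson PR_iff converse_rtrancl_into_rtrancl)
          then show ?thesis using h by (meson PR_iff converse_rtrancl_into_rtrancl)
        qed
      qed
    qed
  qed
  show ?thesis unfolding desc_PR using A B by blast
qed

lemma rot_desc_w:
  assumes wu: "T w = Some u" and uw: "u \<noteq> w"
  shows "desc (rotate F T u w) w = desc T u"
proof -
  let ?T = "rotate F T u w"
  have Tu: "?T u = Some w" using uw by (simp add: rot_cases)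
  have Tw: "?T w = T u" by (simp add: rot_cases)
  have Tx: "?T x = T x \<or> (T x = Some w \<and> ?T x = Some u)" if "x \<noteq> u" "x \<noteq> w" for x
    using that by (simp add: rot_cases)
  have A: "(x,w) \<in> (PR ?T)\<^sup>*" if "(x,u) \<in> (PR T)\<^sup>*" for x
    using that
  proof (induction rule: converse_rtrancl_induct)
    case base then show ?case using Tu by (meson PR_iff r_into_rtrancl)
  next
    case (step x y)
    then have Txy: "T x = Some y" by simp
    show ?case
    proof (cases "x = u")
      case True then show ?thesis using Tu by (meson PR_iff r_into_rtrancl)
    next
      case xu: False
      show ?thesis
      proof (cases "x = w")
        case True then show ?thesis by simp
      next
        case xw: False
        from Tx[OF xu xw] show ?thesis
        proof
          assume "?T x = T x"
          then have "(x,y) \<in> PR ?T" using Txy by simp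
          then show ?thesis using step.IH by (rule converse_rtrancl_into_rtrancl)
        next
          assume h: "T x = Some w \<and> ?T x = Some u"
          have "(u,w) \<in> PR ?T" using Tu by simp
          moreover have "(x,u) \<in> PR ?T" using h by simp
          ultimately show ?thesis by (meson converse_rtrancl_into_rtrancl r_into_rtrancl)
        qed
      qed
    qed
  qed
  have B: "(x,u) \<in> (PR T)\<^sup>*" if "(x,w) \<in> (PR ?T)\<^sup>*" for x
    using that
  proof (induction rule: converse_rtrancl_induct)
    case base then show ?case using wu by (meson PR_iff r_into_rtrancl)
  next
    case (step x y)
    then have Txy: "?T x = Some y" by simp
    show ?case
    proof (cases "x = u")
      case True then show ?thesis by simp
    next
      case xu: False
      show ?thesis
      proof (cases "x = w")
        case True then show ?thesis using wu by (meson PR_iff r_into_rtrancl)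
      next
        case xw: False
        from Tx[OF xu xw] show ?thesis
        proof
          assume "?T x = T x"
          then have "(x,y) \<in> PR T" using Txy by simp
          then show ?thesis using step.IH by (rule converse_rtrancl_into_rtrancl)
        next
          assume h: "T x = Some w \<and> ?T x = Some u"
          then show ?thesis using wu by (meson PR_iff converse_rtrancl_into_rtrancl r_into_rtrancl)
        qed
      qed
    qed
  qed
  show ?thesis unfolding desc_PR using A B by blast
qed

definition contr :: "'a \<Rightarrow> ('a \<Rightarrow> 'a option) \<Rightarrow> ('a \<Rightarrow> 'a option)" where
  "contr q T = (\<lambda>z. if z = q then None else if T z = Some q then T q else T z)"

lemma desc_contr:
  assumes nq: "T q \<noteq> Some q" and zq: "z \<noteq> q"
  shows "desc (contr q T) z = desc T z - {q}"
proof -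
  let ?T = "contr q T"
  have A: "(x,z) \<in> (PR T)\<^sup>*" if "(x,z) \<in> (PR ?T)\<^sup>*" for x
    using that
  proof (induction rule: converse_rtrancl_induct)
    case base then show ?case by simp
  next
    case (step x y)
    then have h: "?T x = Some y" by simp
    show ?case
    proof (cases "T x = Some q")
      case True
      then have "x \<noteq> q" using nq by auto
      then have "T q = Some y" using h True by (simp add: contr_def)
      then show ?thesis using True step.IH by (meson PR_iff converse_rtrancl_into_rtrancl)
    next
      case False
      then have "T x = Some y" using h by (simp add: contr_def split: if_splits)
      then show ?thesis using step.IH by (meson PR_iff converse_rtrancl_into_rtrancl)
    qed
  qed
  have A2: "x \<noteq> q" if "(x,z) \<in> (PR ?T)\<^sup>*" for x
    using that zq by (cases rule: converse_rtranclE) (auto simp: contr_def)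
  have B: "(x \<noteq> q \<longrightarrow> (x,z) \<in> (PR ?T)\<^sup>*) \<and> (x = q \<longrightarrow> (\<forall>y. T q = Some y \<longrightarrow> (y,z) \<in> (PR ?T)\<^sup>*))"
    if "(x,z) \<in> (PR T)\<^sup>*" for x
    using that
  proof (induction rule: converse_rtrancl_induct)
    case base then show ?case using zq by simp
  next
    case (step x y)
    then have Txy: "T x = Some y" by simp
    show ?case
    proof (intro conjI impI allI)
      assume xq: "x \<noteq> q"
      show "(x,z) \<in> (PR ?T)\<^sup>*"
      proof (cases "y = q")
        case True
        then have yz: "(q,z) \<in> (PR T)\<^sup>*" using step.hyps(2) by simp
        then have "(q,z) \<in> (PR T)\<^sup>+" using zq by (intro rt_tr) auto
        then obtain m where m: "(q,m) \<in> PR T" using tranclD by metis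
        then have "T q = Some m" by simp
        then have "(m,z) \<in> (PR ?T)\<^sup>*" using step.IH True by blast
        moreover have "?T x = Some m" using xq Txy True \<open>T q = Some m\<close> by (simp add: contr_def)
        ultimately show ?thesis by (meson PR_iff converse_rtrancl_into_rtrancl)
      next
        case False
        then have "?T x = Some y" using xq Txy by (simp add: contr_def)
        moreover have "(y,z) \<in> (PR ?T)\<^sup>*" using step.IH False by blast
        ultimately show ?thesis by (meson PR_iff converse_rtrancl_into_rtrancl)
      qed
    next
      fix y' assume "x = q" "T q = Some y'"
      then have "y' = y" using Txy by simp
      moreover have "y \<noteq> q" using nq Txy \<open>x = q\<close> by auto
      ultimately show "(y',z) \<in> (PR ?T)\<^sup>*" using step.IH by blast
    qed
  qed
  show ?thesis unfolding desc_PR using A A2 B by blast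
qed

definition trf :: "('a \<Rightarrow> 'a) \<Rightarrow> ('a \<Rightarrow> 'a option) \<Rightarrow> ('a \<Rightarrow> 'a option)" where
  "trf f T = (\<lambda>z. map_option f (T (f z)))"

lemma trf_PR:
  assumes inv: "\<And>z. f (f z) = z"
  shows "(a,b) \<in> PR (trf f T) \<longleftrightarrow> (f a, f b) \<in> PR T"
  using inv by (auto simp: trf_def)

lemma trf_rtrancl:
  assumes inv: "\<And>z. f (f z) = z" and "(a,b) \<in> (PR T)\<^sup>*"
  shows "(f a, f b) \<in> (PR (trf f T))\<^sup>*"
  using assms(2)
proof (induction rule: rtrancl_induct)
  case base then show ?case by simp
next
  case (step y z)
  then have "(f y, f z) \<in> PR (trf f T)" using trf_PR[where f=f, OF inv] inv by simp
  then show ?case by (rule rtrancl_into_rtrancl[OF step.IH])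
qed

lemma trf_trf: assumes inv: "\<And>z. f (f z) = z" shows "trf f (trf f T) = T"
proof
  fix z show "trf f (trf f T) z = T z"
    using inv by (cases "T z") (simp_all add: trf_def)
qed

lemma desc_trf:
  assumes inv: "\<And>z. f (f z) = z"
  shows "desc (trf f T) z = f ` desc T (f z)"
proof
  show "f ` desc T (f z) \<subseteq> desc (trf f T) z"
  proof
    fix x assume "x \<in> f ` desc T (f z)"
    then obtain y where "x = f y" "(y, f z) \<in> (PR T)\<^sup>*" by (auto simp: desc_PR)
    then have "(f y, f (f z)) \<in> (PR (trf f T))\<^sup>*" using trf_rtrancl[where f=f, OF inv] by blast
    then show "x \<in> desc (trf f T) z" using \<open>x = f y\<close> inv by (simp add: desc_PR)
  qed
next
  show "desc (trf f T) z \<subseteq> f ` desc T (f z)"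
  proof
    fix x assume "x \<in> desc (trf f T) z"
    then have "(x,z) \<in> (PR (trf f T))\<^sup>*" by (simp add: desc_PR)
    then have "(f x, f z) \<in> (PR (trf f (trf f T)))\<^sup>*" using trf_rtrancl[where f=f, OF inv] by blast
    then have "f x \<in> desc T (f z)" using trf_trf[where f=f, OF inv] by (simp add: desc_PR)
    then show "x \<in> f ` desc T (f z)" using inv by (metis image_eqI)
  qed
qed

lemma trf_rotate:
  assumes inv: "\<And>z. f (f z) = z" and Ff: "\<And>a b. F (f a) (f b) = F a b"
  shows "trf f (rotate F T u w) = rotate F (trf f T) (f u) (f w)"
proof
  fix z
  have fe: "f a = f b \<longleftrightarrow> a = b" for a b using inv by metis
  have ex: "(\<exists>y\<in>desc (trf f T) z. F (f u) y) \<longleftrightarrow> (\<exists>y\<in>desc T (f z). F u y)"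
  proof -
    have "(\<exists>y\<in>desc (trf f T) z. F (f u) y) \<longleftrightarrow> (\<exists>y\<in>desc T (f z). F (f u) (f y))"
      unfolding desc_trf[where f=f, OF inv] by blast
    then show ?thesis using Ff by simp
  qed
  have t: "trf f T z = Some (f w) \<longleftrightarrow> T (f z) = Some w"
    using inv by (cases "T (f z)") (auto simp: trf_def fe)
  show "trf f (rotate F T u w) z = rotate F (trf f T) (f u) (f w) z"
    unfolding rot_cases[of F "trf f T"] using ex t inv
    by (auto simp: trf_def rot_cases fe)
qed

lemma reach_in_img:
  assumes inv: "\<And>z. f (f z) = z" and Ff: "\<And>a b. F (f a) (f b) = F a b" and r: "reach_in F X x y"
  shows "reach_in F (f ` X) (f x) (f y)"
proof -
  have "(x,y) \<in> (Restr {(a, b). F a b} X)\<^sup>*" using r by (simp add: reach_in_def)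
  then have "(f x, f y) \<in> (Restr {(a, b). F a b} (f ` X))\<^sup>*"
  proof (induction rule: rtrancl_induct)
    case base then show ?case by simp
  next
    case (step b c)
    then have "(f b, f c) \<in> Restr {(a, b). F a b} (f ` X)" using Ff by auto
    then show ?case by (rule rtrancl_into_rtrancl[OF step.IH])
  qed
  then show ?thesis by (simp add: reach_in_def)
qed

lemma conn_img:
  assumes inv: "\<And>z. f (f z) = z" and Ff: "\<And>a b. F (f a) (f b) = F a b" and c: "conn F X"
  shows "conn F (f ` X)"
  unfolding conn_def
proof (intro conjI ballI)
  show "f ` X \<noteq> {}" using c by (simp add: conn_def)
  fix x y assume "x \<in> f ` X" "y \<in> f ` X"
  then obtain a b where "a \<in> X" "b \<in> X" "x = f a" "y = f b" by blast
  then show "reach_in F (f ` X) x y" using reach_in_img[where f=f and F=F, OF inv Ff] c by (simp add: conn_def)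
qed

lemma trf_ok:
  assumes inv: "\<And>z. f (f z) = z" and Ff: "\<And>a b. F (f a) (f b) = F a b" and fS: "\<And>z. z \<in> S \<longleftrightarrow> f z \<in> S"
    and ok: "tree_ok S F T"
  shows "tree_ok S F (trf f T)"
proof -
  note d = tree_okD[OF ok]
  obtain r where r: "r \<in> S" "T r = None" "desc T r = S" using d(4) by blast
  have img: "f ` S = S"
  proof
    show "f ` S \<subseteq> S" using fS by blast
    show "S \<subseteq> f ` S" using fS inv by (metis image_eqI subsetI)
  qed
  show ?thesis
  proof (rule tree_okI[of S _ "f r"])
    show "finite S" using d(1) .
    fix a assume "a \<notin> S" then show "trf f T a = None" using d(2) fS by (simp add: trf_def)
  next
    fix a b assume "trf f T a = Some b"
    then obtain c where "T (f a) = Some c" "b = f c" by (auto simp: trf_def)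
    then show "b \<in> S" using d(3) fS inv by metis
  next
    show "f r \<in> S" using r fS inv by simp
    show "trf f T (f r) = None" using r inv by (simp add: trf_def)
    show "desc (trf f T) (f r) = S" using desc_trf[where f=f, OF inv] r img inv by simp
  next
    fix z assume "z \<in> S"
    then have "conn F (desc T (f z))" using d(5) fS by blast
    then show "conn F (desc (trf f T) z)" using desc_trf[where f=f, OF inv] conn_img[where f=f and F=F, OF inv Ff] by simp
  next
    fix a b assume "a \<in> S" "b \<in> S" "F a b"
    then have "f a \<in> desc T (f b) \<or> f b \<in> desc T (f a)" using d(6) fS Ff by simp
    then show "a \<in> desc (trf f T) b \<or> b \<in> desc (trf f T) a"
      using desc_trf[where f=f, OF inv] inv by (metis image_eqI)
  qed
qed

lemma acyc1: "acyc T \<Longrightarrow> T a \<noteq> Some a"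
  unfolding acyc_def by (metis PR_iff r_into_trancl')

lemma acyc2: "acyc T \<Longrightarrow> T a = Some b \<Longrightarrow> T b = Some a \<Longrightarrow> False"
  unfolding acyc_def by (metis PR_iff r_into_trancl' trancl_into_trancl)

lemma acyc3: "acyc T \<Longrightarrow> T a = Some b \<Longrightarrow> T b = Some c \<Longrightarrow> T c = Some a \<Longrightarrow> False"
  unfolding acyc_def by (metis PR_iff r_into_trancl' trancl_into_trancl)

lemma desc_parent: "x \<in> desc T z \<Longrightarrow> x \<noteq> z \<Longrightarrow> T x = Some p \<Longrightarrow> p \<in> desc T z"
proof -
  assume h: "x \<in> desc T z" "x \<noteq> z" "T x = Some p"
  then have "(x,z) \<in> (PR T)\<^sup>+" by (intro rt_tr) (auto simp: desc_PR)
  then obtain m where "(x,m) \<in> PR T" "(m,z) \<in> (PR T)\<^sup>*" using tranclD by metis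
  then show ?thesis using h(3) by (simp add: desc_PR)
qed

lemma desc_fin: "tree_ok S F T \<Longrightarrow> z \<in> S \<Longrightarrow> finite (desc T z)"
  using ok_desc_sub tree_okD(1) finite_subset by metis

lemma ok_par_in: "tree_ok S F T \<Longrightarrow> T a = Some b \<Longrightarrow> a \<in> S \<and> b \<in> S"
  using tree_okD(2,3) by (metis option.distinct(1))

context twin
begin

abbreviation okt where "okt T \<equiv> tree_ok Vt Et T"

lemma Vt_cases: "z \<in> Vt \<Longrightarrow> z \<noteq> v \<Longrightarrow> z \<noteq> v' \<Longrightarrow> z \<in> V" by (simp add: Vt_def)

lemma vVt[simp]: "v \<in> Vt" and v'Vt[simp]: "v' \<in> Vt" using vV by (auto simp: Vt_def)

lemma A_adj: "z \<in> Vt \<Longrightarrow> z \<noteq> v \<Longrightarrow> z \<noteq> v' \<Longrightarrow> Et z v \<and> Et v z \<and> Et z v' \<and> Et v' z"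
  using Vt_cases Et_vL Et_vR Et_v'L Et_v'R by blast

lemma sib:
  assumes ok: "okt T" and c: "T c1 = Some z" "T c2 = Some z" "c1 \<noteq> c2"
    and ab: "a \<in> desc T c1" "b \<in> desc T c2"
  shows "\<not> Et a b"
proof
  assume e: "Et a b"
  have ac: "acyc T" using ok_acyc[OF ok] .
  have "a \<in> Vt" "b \<in> Vt" using Et_in[OF e] by auto
  then have "a \<in> desc T b \<or> b \<in> desc T a" using tree_okD(6)[OF ok] e by blast
  then show False
  proof
    assume "a \<in> desc T b"
    then have "a \<in> desc T c2" using desc_trans ab(2) by metis
    then show False using siblings_disjoint[OF ac c] ab(1) by blast
  next
    assume "b \<in> desc T a"
    then have "b \<in> desc T c1" using desc_trans ab(1) by metis
    then show False using siblings_disjoint[OF ac c] ab(2) by blast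
  qed
qed

lemma typeA_child:
  assumes ok: "okt T" and va: "v \<in> desc T v'"
  shows "\<exists>z0. T z0 = Some v' \<and> v \<in> desc T z0 \<and> (\<forall>c. T c = Some v' \<longrightarrow> c = z0)
           \<and> desc T v' = insert v' (desc T z0)"
proof -
  have ac: "acyc T" using ok_acyc[OF ok] .
  have "v \<noteq> v'" using vv' .
  then obtain z0 where z0: "T z0 = Some v'" "v \<in> desc T z0"
    using va desc_unfold[of T v'] by blast
  have uq: "c = z0" if "T c = Some v'" for c
  proof (rule ccontr)
    assume "c \<noteq> z0"
    have cV: "c \<in> Vt" using ok_par_in[OF ok that] by blast
    have "c \<noteq> v'" using acyc1[OF ac] that by metis
    moreover have "c \<noteq> v"
    proof
      assume "c = v"
      then have "v \<in> desc T c" by simp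
      then show False using siblings_disjoint[OF ac that z0(1) \<open>c \<noteq> z0\<close>] z0(2) by blast
    qed
    ultimately have "Et c v" using A_adj cV by blast
    then show False using sib[OF ok that z0(1) \<open>c \<noteq> z0\<close> desc_self z0(2)] by blast
  qed
  have "desc T v' = insert v' (\<Union>{desc T c | c. T c = Some v'})" by (rule desc_unfold)
  also have "{desc T c | c. T c = Some v'} = {desc T z0}" using uq z0(1) by blast
  finally show ?thesis using z0 uq by blast
qed

lemma root_ex: "okt T \<Longrightarrow> z \<in> Vt \<Longrightarrow> T z = None \<Longrightarrow> desc T z = Vt"
proof -
  assume ok: "okt T" and z: "z \<in> Vt" "T z = None"
  obtain r where r: "r \<in> Vt" "T r = None" "desc T r = Vt" using tree_okD(4)[OF ok] by blast
  then show ?thesis using ok_root_unique[OF ok z r] by simp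
qed

lemma typeB_struct:
  assumes ok: "okt T" and nb: "v \<notin> desc T v'" "v' \<notin> desc T v"
  shows "(\<forall>c. T c \<noteq> Some v') \<and> (\<forall>c. T c \<noteq> Some v) \<and> (\<exists>q. T v = Some q \<and> T v' = Some q \<and> q \<in> V \<and> q \<noteq> v)"
proof -
  have ac: "acyc T" using ok_acyc[OF ok] .
  have l1: "T c \<noteq> Some v'" for c
  proof
    assume h: "T c = Some v'"
    have cV: "c \<in> Vt" using ok_par_in[OF ok h] by blast
    have "c \<noteq> v'" using acyc1[OF ac] h by metis
    moreover have "c \<noteq> v" using h nb(1) desc_child[of T c v'] by blast
    ultimately have "Et c v" using A_adj cV by blast
    then have "c \<in> desc T v \<or> v \<in> desc T c" using tree_okD(6)[OF ok] cV by simp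
    then show False
    proof
      assume "c \<in> desc T v"
      then have "v \<in> desc T v' \<or> v' \<in> desc T v" using desc_comparable desc_child[of T c v', OF h] by metis
      then show False using nb by blast
    next
      assume "v \<in> desc T c"
      then show False using nb(1) desc_childI[of T c _, OF h] by blast
    qed
  qed
  have l2: "T c \<noteq> Some v" for c
  proof
    assume h: "T c = Some v"
    have cV: "c \<in> Vt" using ok_par_in[OF ok h] by blast
    have "c \<noteq> v" using acyc1[OF ac] h by metis
    moreover have "c \<noteq> v'" using h nb(2) desc_child[of T c v] by blast
    ultimately have "Et c v'" using A_adj cV by blast
    then have "c \<in> desc T v' \<or> v' \<in> desc T c" using tree_okD(6)[OF ok] cV by simp
    then show False
    proof
      assume "c \<in> desc T v'"
      then have "v \<in> desc T v' \<or> v' \<in> desc T v" using desc_comparable desc_child[of T c v, OF h] by metis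
      then show False using nb by blast
    next
      assume "v' \<in> desc T c"
      then show False using nb(2) desc_childI[of T c _, OF h] by blast
    qed
  qed
  have "T v' \<noteq> None"
  proof
    assume "T v' = None"
    then have "desc T v' = Vt" using root_ex[OF ok] by simp
    then show False using nb(1) by simp
  qed
  then obtain q where q: "T v' = Some q" by blast
  have "T v \<noteq> None"
  proof
    assume "T v = None"
    then have "desc T v = Vt" using root_ex[OF ok] by simp
    then show False using nb(2) by simp
  qed
  then obtain p where p: "T v = Some p" by blast
  have qVt: "q \<in> Vt" and pVt: "p \<in> Vt" using ok_par_in[OF ok q] ok_par_in[OF ok p] by auto
  have qv': "q \<noteq> v'" using acyc1[OF ac] q by metis
  have qv: "q \<noteq> v" using l2 q by metis
  have pv: "p \<noteq> v" using acyc1[OF ac] p by metis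
  have pv': "p \<noteq> v'" using l1 p by metis
  have "Et q v" using A_adj qVt qv qv' by blast
  then have "q \<in> desc T v \<or> v \<in> desc T q" using tree_okD(6)[OF ok] qVt by simp
  moreover have "desc T v = {v}" using desc_leaf l2 by metis
  ultimately have "v \<in> desc T q" using qv by blast
  then have pq: "p \<in> desc T q" using desc_parent[of v T q p, OF _ _ p] qv by metis
  have "Et p v'" using A_adj pVt pv pv' by blast
  then have "p \<in> desc T v' \<or> v' \<in> desc T p" using tree_okD(6)[OF ok] pVt by simp
  moreover have "desc T v' = {v'}" using desc_leaf l1 by metis
  ultimately have "v' \<in> desc T p" using pv' by blast
  then have qp: "q \<in> desc T p" using desc_parent[of v' T p q, OF _ _ q] pv' by metis
  have "p = q" using acyc_antisym[OF ac pq qp] .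
  then show ?thesis using l1 l2 p q qVt qv qv' Vt_cases by blast
qed

lemma K:
  assumes ok: "okt T" and nrm: "v' \<notin> desc T v" and z: "v' \<in> desc T z" "z \<noteq> v'"
  shows "v \<in> desc T z"
proof (cases "v \<in> desc T v'")
  case True then show ?thesis using desc_trans z(1) by metis
next
  case False
  obtain q where q: "T v = Some q" "T v' = Some q" using typeB_struct[OF ok False nrm] by blast
  have "q \<in> desc T z" using desc_parent[OF z(1) _ q(2)] z(2) by metis
  moreover have "v \<in> desc T q" using desc_child[of T v q] q(1) by simp
  ultimately show ?thesis using desc_trans by metis
qed

lemma contr_ok:
  assumes ok: "okt T" and nrm: "v' \<notin> desc T v"
  shows "tree_ok V Et (contr v' T)"
proof -
  let ?T = "contr v' T"
  note d = tree_okD[OF ok]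
  have ac: "acyc T" using ok_acyc[OF ok] .
  have nq: "T v' \<noteq> Some v'" using acyc1[OF ac] .
  have dz: "desc ?T z = desc T z - {v'}" if "z \<noteq> v'" for z using desc_contr[of T v' z, OF nq that] .
  obtain r where r: "r \<in> Vt" "T r = None" "desc T r = Vt" using d(4) by blast
  have root: "\<exists>r0\<in>V. ?T r0 = None \<and> desc ?T r0 = V"
  proof (cases "r = v'")
    case False
    then have "r \<in> V" using r(1) by (simp add: Vt_def)
    moreover have "?T r = None" using r(2) False by (simp add: contr_def)
    moreover have "desc ?T r = V" using dz[OF False] r(3) v'V by (auto simp: Vt_def)
    ultimately show ?thesis by blast
  next
    case True
    then have "v \<in> desc T v'" using r(3) by simp
    then obtain z0 where z0: "T z0 = Some v'" "desc T v' = insert v' (desc T z0)"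
      using typeA_child[OF ok] by blast
    have "v' \<notin> desc T z0" using acyc_parent_not_desc[OF ac z0(1)] .
    then have dz0: "desc T z0 = V" using z0(2) r(3) True v'V by (auto simp: Vt_def)
    have z0v: "z0 \<noteq> v'" using acyc1[OF ac] z0(1) by metis
    have "z0 \<in> V" using dz0 desc_self by metis
    moreover have "?T z0 = None" using z0(1) r(2) True z0v by (simp add: contr_def)
    moreover have "desc ?T z0 = V" using dz[OF z0v] dz0 v'V by auto
    ultimately show ?thesis by blast
  qed
  then obtain r0 where r0: "r0 \<in> V" "?T r0 = None" "desc ?T r0 = V" by blast
  show ?thesis
  proof (rule tree_okI[OF finV _ _ r0])
    fix a assume "a \<notin> V"
    then show "?T a = None"
    proof (cases "a = v'")
      case False
      then have "a \<notin> Vt" using \<open>a \<notin> V\<close> by (simp add: Vt_def)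
      then have "T a = None" using d(2) by blast
      then show ?thesis by (simp add: contr_def)
    qed (simp add: contr_def)
  next
    fix a b assume h: "?T a = Some b"
    then have av: "a \<noteq> v'" by (auto simp: contr_def)
    show "b \<in> V"
    proof (cases "T a = Some v'")
      case True
      then have "T v' = Some b" using h av by (simp add: contr_def)
      then show ?thesis using d(3) nq Vt_cases vv' by (metis Vt_def insertE)
    next
      case False
      then have "T a = Some b" using h av by (simp add: contr_def)
      then show ?thesis using d(3) False by (metis Vt_def insertE)
    qed
  next
    fix z assume zV: "z \<in> V"
    then have zv': "z \<noteq> v'" using v'V by auto
    have zVt: "z \<in> Vt" using zV by (simp add: Vt_def)
    show "conn Et (desc ?T z)"
    proof (cases "v' \<in> desc T z")
      case False
      then show ?thesis using dz[OF zv'] d(5)[OF zVt] by simp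
    next
      case True
      have vz: "v \<in> desc T z" using K[OF ok nrm True zv'] .
      let ?X = "desc T z - {v'}"
      have Xs: "?X \<subseteq> Vt" using ok_desc_sub[OF ok zVt] by blast
      have "?X = insert v (\<Union>((\<lambda>a. {a}) ` (?X - {v})))" using vz vv' by auto
      moreover have "conn Et (insert v (\<Union>((\<lambda>a. {a}) ` (?X - {v}))))"
      proof (rule conn_star[OF symmEt], intro ballI conjI)
        fix C assume "C \<in> (\<lambda>a. {a}) ` (?X - {v})"
        then obtain a where a: "a \<in> ?X - {v}" "C = {a}" by blast
        show "conn Et C" using a conn_singleton by simp
        have "Et v a" using A_adj a Xs by blast
        then show "\<exists>c\<in>C. Et v c" using a by blast
      qed
      ultimately show ?thesis using dz[OF zv'] by simp
    qed
  next
    fix a b assume ab: "a \<in> V" "b \<in> V" "Et a b"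
    then have "a \<in> desc T b \<or> b \<in> desc T a" using d(6) by (simp add: Vt_def)
    moreover have "a \<noteq> v'" "b \<noteq> v'" using ab v'V by auto
    ultimately show "a \<in> desc ?T b \<or> b \<in> desc ?T a" using dz by blast
  qed
qed

end

context twin
begin

lemma EQv':
  assumes ok: "okt T" and nrm: "v' \<notin> desc T v" and z: "v' \<in> desc T z" "z \<noteq> v'"
  shows "(\<exists>y\<in>desc T z. Et u y) \<longleftrightarrow> (\<exists>y\<in>desc T z - {v'}. Et u y)"
proof
  assume "\<exists>y\<in>desc T z. Et u y"
  then obtain y where y: "y \<in> desc T z" "Et u y" by blast
  show "\<exists>y\<in>desc T z - {v'}. Et u y"
  proof (cases "y = v'")
    case True
    then have "u \<in> V" "u \<noteq> v" using y(2) Et_v'R by auto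
    then have "Et u v" using Et_vR by blast
    moreover have "v \<in> desc T z" using K[OF ok nrm z] .
    ultimately show ?thesis using vv' by blast
  next
    case False then show ?thesis using y by blast
  qed
qed blast

lemma Lc:
  assumes ok: "okt T" and nrm: "v' \<notin> desc T v" and wu: "T w = Some u" and uv': "u \<noteq> v'" and wv': "w \<noteq> v'"
  shows "contr v' (rotate Et T u w) = rotate Et (contr v' T) u w"
proof
  fix z
  let ?R = "rotate Et T u w"
  have ac: "acyc T" using ok_acyc[OF ok] .
  have nq: "T v' \<noteq> Some v'" using acyc1[OF ac] .
  have uw: "u \<noteq> w" using acyc1[OF ac] wu by metis
  have dcz: "desc (contr v' T) x = desc T x - {v'}" if "x \<noteq> v'" for x
    using desc_contr[of T v' x, OF nq that] .
  show "contr v' ?R z = rotate Et (contr v' T) u w z"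
  proof (cases "z = v'")
    case True
    then show ?thesis using uv' wv' by (simp add: contr_def rot_cases)
  next
    case zv': False
    show ?thesis
    proof (cases "z = w")
      case True
      have "T u = Some v' \<Longrightarrow> T v' \<noteq> Some w" using acyc3[OF ac wu] by metis
      then show ?thesis using True uw uv' wv' by (auto simp: contr_def rot_cases)
    next
      case zw: False
      show ?thesis
      proof (cases "z = u")
        case True
        then show ?thesis using uw uv' wv' zw by (simp add: contr_def rot_cases)
      next
        case zu: False
        show ?thesis
        proof (cases "T z = Some v'")
          case True
          have tA: "v \<in> desc T v'"
          proof (rule ccontr)
            assume "v \<notin> desc T v'"
            then show False using typeB_struct[OF ok _ nrm] True by blast
          qed
          obtain z0 where z0: "T z0 = Some v'" "(\<forall>c. T c = Some v' \<longrightarrow> c = z0)" "desc T v' = insert v' (desc T z0)"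
            using typeA_child[OF ok tA] by blast
          have "z = z0" using z0(2) True by blast
          have nz: "v' \<notin> desc T z" using acyc_parent_not_desc[OF ac True] .
          have vz: "v \<in> desc T z" using typeA_child[OF ok tA] z0(2) \<open>z = z0\<close> by blast
          have eq: "(\<exists>y\<in>desc T v'. Et u y) \<longleftrightarrow> (\<exists>y\<in>desc T z - {v'}. Et u y)"
          proof
            assume "\<exists>y\<in>desc T v'. Et u y"
            then obtain y where y: "y \<in> desc T v'" "Et u y" by blast
            show "\<exists>y\<in>desc T z - {v'}. Et u y"
            proof (cases "y = v'")
              case True
              then have "u \<in> V" "u \<noteq> v" using y(2) Et_v'R by auto
              then have "Et u v" using Et_vR by blast
              then show ?thesis using vz vv' by blast
            next
              case False then show ?thesis using y z0(3) \<open>z = z0\<close> by blast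
            qed
          next
            assume "\<exists>y\<in>desc T z - {v'}. Et u y"
            then show "\<exists>y\<in>desc T v'. Et u y" using z0(3) \<open>z = z0\<close> by blast
          qed
          have R1: "?R z = Some v'" using True zu zw wv' by (simp add: rot_cases)
          have R2: "?R v' = (if T v' = Some w \<and> (\<exists>y\<in>desc T v'. Et u y) then Some u else T v')"
            using uv' wv' by (simp add: rot_cases)
          have L: "contr v' ?R z = ?R v'" using R1 zv' by (simp add: contr_def)
          have C: "contr v' T z = T v'" using True zv' by (simp add: contr_def)
          have RR: "rotate Et (contr v' T) u w z = (if T v' = Some w \<and> (\<exists>y\<in>desc T z - {v'}. Et u y) then Some u else T v')"
            using zu zw C dcz[OF zv'] by (auto simp: rot_cases)
          show ?thesis using L R2 RR eq by simp
        next
          case False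
          have C: "contr v' T z = T z" using False zv' by (simp add: contr_def)
          have eq: "(\<exists>y\<in>desc T z. Et u y) \<longleftrightarrow> (\<exists>y\<in>desc T z - {v'}. Et u y)"
          proof (cases "v' \<in> desc T z")
            case True then show ?thesis using EQv'[OF ok nrm True zv'] by simp
          next
            case False then show ?thesis by simp
          qed
          have R1: "?R z = (if T z = Some w \<and> (\<exists>y\<in>desc T z. Et u y) then Some u else T z)"
            using zu zw by (simp add: rot_cases)
          then have "?R z \<noteq> Some v'" using False uv' by auto
          then have L: "contr v' ?R z = ?R z" using zv' by (simp add: contr_def)
          have RR: "rotate Et (contr v' T) u w z = (if T z = Some w \<and> (\<exists>y\<in>desc T z - {v'}. Et u y) then Some u else T z)"
            using zu zw C dcz[OF zv'] by (auto simp: rot_cases)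
          show ?thesis using L R1 RR eq by simp
        qed
      qed
    qed
  qed
qed

end

context twin
begin

definition normT where "normT T = (if v' \<in> desc T v then trf sw T else T)"
definition phi where "phi T = contr v' (normT T)"
definition hh where "hh T = (if v \<in> desc T v' \<or> v' \<in> desc T v
   then (card (desc (normT T) v') + (if v' \<in> desc T v then 0 else 1)) mod 2 else 2)"

lemma sw_inv: "\<And>z. sw (sw z) = z" by simp
lemma Et_sw': "\<And>a b. Et (sw a) (sw b) = Et a b" using Et_sw by simp
lemma sw_Vt': "\<And>z. z \<in> Vt \<longleftrightarrow> sw z \<in> Vt" using sw_Vt by simp

lemma okt_trf: "okt T \<Longrightarrow> okt (trf sw T)"
  using trf_ok[where f=sw and F=Et, OF sw_inv Et_sw' sw_Vt'] by blast

lemma desc_sw: "desc (trf sw T) z = sw ` desc T (sw z)"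
  using desc_trf[where f=sw, OF sw_inv] .

lemma mem_sw: "x \<in> sw ` X \<longleftrightarrow> sw x \<in> X"
  by (metis image_iff sw_sw)

lemma desc_sw_vv': "v \<in> desc (trf sw T) v' \<longleftrightarrow> v' \<in> desc T v"
  by (simp add: desc_sw mem_sw)

lemma desc_sw_v'v: "v' \<in> desc (trf sw T) v \<longleftrightarrow> v \<in> desc T v'"
  by (simp add: desc_sw mem_sw)

lemma not_both: "okt T \<Longrightarrow> v \<in> desc T v' \<Longrightarrow> v' \<in> desc T v \<Longrightarrow> False"
  using acyc_antisym[OF ok_acyc] vv' by metis

lemma normT_ok: "okt T \<Longrightarrow> okt (normT T) \<and> v' \<notin> desc (normT T) v"
  using okt_trf desc_sw_v'v not_both by (auto simp: normT_def)

lemma phi_ok: "okt T \<Longrightarrow> tree_ok V Et (phi T)"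
  unfolding phi_def using normT_ok contr_ok by blast

lemma typeB_trf:
  assumes ok: "okt T" and nb: "v \<notin> desc T v'" "v' \<notin> desc T v"
  shows "trf sw T = T"
proof
  fix z
  obtain q where s: "\<forall>c. T c \<noteq> Some v'" "\<forall>c. T c \<noteq> Some v" "T v = Some q" "T v' = Some q" "q \<in> V" "q \<noteq> v"
    using typeB_struct[OF ok nb] by blast
  have sq: "sw q = q" using s(5,6) v'V by (auto simp: sw_def)
  have fix1: "map_option sw (T x) = T x" for x
  proof (cases "T x")
    case (Some p)
    then have "p \<noteq> v" "p \<noteq> v'" using s(1,2) by auto
    then show ?thesis using Some by simp
  qed simp
  show "trf sw T z = T z"
  proof -
    consider "z = v" | "z = v'" | "z \<noteq> v \<and> z \<noteq> v'" by blast
    then show ?thesis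
    proof cases
      case 1 then show ?thesis using s sq by (simp add: trf_def)
    next
      case 2 then show ?thesis using s sq vv' by (simp add: trf_def)
    next
      case 3 then show ?thesis using fix1 by (simp add: trf_def)
    qed
  qed
qed

lemma phi_trf: assumes ok: "okt T" shows "phi (trf sw T) = phi T"
proof (cases "v' \<in> desc T v")
  case True
  then have "v' \<notin> desc (trf sw T) v" using desc_sw_v'v not_both[OF ok] by blast
  then show ?thesis using True by (simp add: phi_def normT_def)
next
  case False
  show ?thesis
  proof (cases "v \<in> desc T v'")
    case True
    then have "v' \<in> desc (trf sw T) v" using desc_sw_v'v by blast
    then show ?thesis using False by (simp add: phi_def normT_def trf_trf[where f=sw, OF sw_inv])
  next
    case nb: False
    then show ?thesis using typeB_trf[OF ok nb False] by simp
  qed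
qed

lemma hh_trf: assumes ok: "okt T" shows "hh (trf sw T) = (if hh T = 2 then 2 else 1 - hh T)"
proof (cases "v' \<in> desc T v")
  case True
  have n1: "v' \<notin> desc (trf sw T) v" using True desc_sw_v'v not_both[OF ok] by blast
  have n2: "v \<in> desc (trf sw T) v'" using True desc_sw_vv' by blast
  have "hh T = card (desc (trf sw T) v') mod 2" using True by (simp add: hh_def normT_def)
  moreover have "hh (trf sw T) = (card (desc (trf sw T) v') + 1) mod 2" using n1 n2 by (simp add: hh_def normT_def)
  ultimately show ?thesis by presburger
next
  case False
  show ?thesis
  proof (cases "v \<in> desc T v'")
    case True
    have n1: "v' \<in> desc (trf sw T) v" using True desc_sw_v'v by blast
    have "hh T = (card (desc T v') + 1) mod 2" using True False by (simp add: hh_def normT_def)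
    moreover have "hh (trf sw T) = card (desc T v') mod 2" using n1
      by (simp add: hh_def normT_def trf_trf[where f=sw, OF sw_inv])
    ultimately show ?thesis by presburger
  next
    case nb: False
    then show ?thesis using typeB_trf[OF ok nb False] False by (simp add: hh_def)
  qed
qed

lemma hh_le: "hh T \<le> 2" by (simp add: hh_def)

lemma hh_typeA: "v \<in> desc T v' \<or> v' \<in> desc T v \<Longrightarrow> hh T < 2" by (simp add: hh_def)

lemma hh_a: "okt T \<Longrightarrow> v \<in> desc T v' \<Longrightarrow> hh T = (card (desc T v') + 1) mod 2 \<and> phi T = contr v' T"
  using not_both by (auto simp: hh_def phi_def normT_def)

lemma hh_b: "v \<notin> desc T v' \<Longrightarrow> v' \<notin> desc T v \<Longrightarrow> hh T = 2 \<and> phi T = contr v' T"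
  by (auto simp: hh_def phi_def normT_def)

lemma rot_E_Et:
  assumes ok: "tree_ok V Et X" and wu: "X w = Some u"
  shows "rotate E X u w = rotate Et X u w"
proof
  fix z
  have uV: "u \<in> V" using ok_par_in[OF ok wu] by blast
  have "(\<exists>y\<in>desc X z. E u y) \<longleftrightarrow> (\<exists>y\<in>desc X z. Et u y)" if "X z = Some w" for z
  proof -
    have "z \<in> V" using ok_par_in[OF ok that(1)] by blast
    then have "desc X z \<subseteq> V" using ok_desc_sub[OF ok] by blast
    then show ?thesis using Et_V uV by blast
  qed
  then show "rotate E X u w z = rotate Et X u w z"
    unfolding rot_cases by auto
qed

end

lemma rotw: "rotate F T u w w = T u" by (simp add: rot_cases)
lemma rotu: "u \<noteq> w \<Longrightarrow> rotate F T u w u = Some w" by (simp add: rot_cases)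
lemma roto: "z \<noteq> w \<Longrightarrow> z \<noteq> u \<Longrightarrow>
  rotate F T u w z = (if T z = Some w \<and> (\<exists>y\<in>desc T z. F u y) then Some u else T z)"
  by (simp add: rot_cases)
lemma roto_same: "z \<noteq> w \<Longrightarrow> z \<noteq> u \<Longrightarrow> T z \<noteq> Some w \<Longrightarrow> rotate F T u w z = T z"
  by (simp add: rot_cases)

context twin
begin

lemma M_N:
  assumes ok1: "okt T1" and ok2: "okt T2" and nrm: "v' \<notin> desc T1 v" and wu: "T1 w = Some u"
    and T2: "T2 = rotate Et T1 u w" and uv': "u \<noteq> v'" and wv': "w \<noteq> v'"
    and wv: "v \<in> desc T1 v' \<or> w \<noteq> v"
  shows "rot_adj E (phi T1) (phi T2) \<and> hh T1 = hh T2"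
proof -
  have ac: "acyc T1" using ok_acyc[OF ok1] .
  have ac2: "acyc T2" using ok_acyc[OF ok2] .
  have uw: "u \<noteq> w" using acyc1[OF ac] wu by metis
  have d'': "desc T2 v' = desc T1 v'" using rot_desc_other[of T1 w u, OF wu uw] uv' wv' T2 by metis
  have hh_eq: "hh T1 = hh T2 \<and> phi T1 = contr v' T1 \<and> phi T2 = contr v' T2"
  proof (cases "v \<in> desc T1 v'")
    case True
    then have "v \<in> desc T2 v'" using d'' by simp
    then show ?thesis using hh_a[OF ok1 True] hh_a[OF ok2] d'' by simp
  next
    case False
    then have wv2: "w \<noteq> v" using wv by simp
    have uv: "u \<noteq> v" using typeB_struct[OF ok1 False nrm] wu by blast
    have dv: "desc T2 v = desc T1 v" using rot_desc_other[of T1 w u, OF wu uw] uv wv2 T2 by metis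
    have "v \<notin> desc T2 v'" "v' \<notin> desc T2 v" using d'' dv False nrm by auto
    then show ?thesis using hh_b[OF False nrm] hh_b by metis
  qed
  have Lc': "contr v' T2 = rotate Et (contr v' T1) u w" using Lc[OF ok1 nrm wu uv' wv'] T2 by simp
  have c1w: "contr v' T1 w = Some u" using wu uv' wv' by (simp add: contr_def)
  have pok: "tree_ok V Et (contr v' T1)" using contr_ok[OF ok1 nrm] .
  have rE: "contr v' T2 = rotate E (contr v' T1) u w" using Lc' rot_E_Et[OF pok c1w] by simp
  have neq: "contr v' T1 \<noteq> contr v' T2"
  proof
    assume h: "contr v' T1 = contr v' T2"
    have "contr v' T2 u = Some w" using Lc' uw uv' by (simp add: rot_cases contr_def)
    then have "contr v' T1 u = Some w" using h by simp
    then show False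
    proof (cases "T1 u = Some v'")
      case True
      then have "T1 v' = Some w" using \<open>contr v' T1 u = Some w\<close> uv' by (simp add: contr_def)
      then show False using acyc3[OF ac wu True] by simp
    next
      case False
      then have "T1 u = Some w" using \<open>contr v' T1 u = Some w\<close> uv' by (simp add: contr_def)
      then show False using acyc2[OF ac wu] by simp
    qed
  qed
  have "rot_adj E (contr v' T1) (contr v' T2)"
    unfolding rot_adj_def using neq c1w rE by blast
  then show ?thesis using hh_eq by simp
qed

lemma M_Xup:
  assumes ok1: "okt T1" and ok2: "okt T2" and va: "v \<in> desc T1 v'" and wu: "T1 v' = Some u"
    and T2: "T2 = rotate Et T1 u v'"
  shows "phi T2 = phi T1 \<and> hh T1 \<noteq> hh T2"
proof -
  have ac: "acyc T1" using ok_acyc[OF ok1] .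
  obtain z0 where z0: "T1 z0 = Some v'" "v \<in> desc T1 z0" "\<forall>c. T1 c = Some v' \<longrightarrow> c = z0"
      "desc T1 v' = insert v' (desc T1 z0)" using typeA_child[OF ok1 va] by blast
  have uVt: "u \<in> Vt" using ok_par_in[OF ok1 wu] by blast
  have uv': "u \<noteq> v'" using acyc1[OF ac] wu by metis
  have uv: "u \<noteq> v"
  proof
    assume "u = v"
    then have "v' \<in> desc T1 v" using desc_child[of T1 v' u] wu by simp
    then show False using not_both[OF ok1 va] by blast
  qed
  have uA: "Et u v" using A_adj[OF uVt uv uv'] by blast
  have uch: "c = v'" if "T1 c = Some u" for c
  proof (rule ccontr)
    assume cv': "c \<noteq> v'"
    have cVt: "c \<in> Vt" using ok_par_in[OF ok1 that] by blast
    have "v \<notin> desc T1 c" using siblings_disjoint[OF ac that wu cv'] va by blast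
    then have "c \<noteq> v" by auto
    then have "Et c v'" using A_adj[OF cVt _ cv'] by blast
    then show False using sib[OF ok1 that wu cv' desc_self desc_self] by blast
  qed
  have z0v': "z0 \<noteq> v'" using acyc1[OF ac] z0(1) by metis
  have z0u: "z0 \<noteq> u" using acyc2[OF ac wu] z0(1) by metis
  have T2v': "T2 v' = T1 u" using T2 by (simp add: rotw)
  have T2u: "T2 u = Some v'" using T2 uv' by (simp add: rotu)
  have ex0: "\<exists>y\<in>desc T1 z0. Et u y" using z0(2) uA by blast
  have T2z0: "T2 z0 = Some u" unfolding T2 roto[OF z0v' z0u] using z0(1) ex0 by simp
  have T2o: "T2 z = T1 z" if "z \<noteq> v'" "z \<noteq> u" "z \<noteq> z0" for z
  proof -
    have "T1 z \<noteq> Some v'" using z0(3) that(3) by blast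
    then show ?thesis unfolding T2 by (rule roto_same[OF that(1,2)])
  qed
  have uv'2: "T1 u \<noteq> Some v'" using acyc2[OF ac wu] by metis
  have d2: "desc T2 v' = desc T1 u" using rot_desc_w[of T1 v' u, OF wu uv'] T2 by simp
  have du: "desc T1 u = insert u (desc T1 v')"
  proof -
    have "desc T1 u = insert u (\<Union>{desc T1 c | c. T1 c = Some u})" by (rule desc_unfold)
    also have "{desc T1 c | c. T1 c = Some u} = {desc T1 v'}" using uch wu by blast
    finally show ?thesis by simp
  qed
  have va2: "v \<in> desc T2 v'" using d2 du va by simp
  have h1: "hh T1 = (card (desc T1 v') + 1) mod 2 \<and> phi T1 = contr v' T1" using hh_a[OF ok1 va] .
  have h2: "hh T2 = (card (desc T2 v') + 1) mod 2 \<and> phi T2 = contr v' T2" using hh_a[OF ok2 va2] .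
  have "u \<notin> desc T1 v'" using acyc_parent_not_desc[OF ac wu] .
  moreover have "finite (desc T1 v')" using desc_fin[OF ok1] by simp
  ultimately have "card (desc T2 v') = card (desc T1 v') + 1" using d2 du by simp
  then have hne: "hh T1 \<noteq> hh T2" using h1 h2 by presburger
  have "contr v' T2 = contr v' T1"
  proof
    fix z
    consider "z = v'" | "z = u" | "z = z0" | "z \<noteq> v' \<and> z \<noteq> u \<and> z \<noteq> z0" by blast
    then show "contr v' T2 z = contr v' T1 z"
    proof cases
      case 1 then show ?thesis by (simp add: contr_def)
    next
      case 2 then show ?thesis using T2u T2v' uv' uv'2 by (simp add: contr_def)
    next
      case 3 then show ?thesis using T2z0 z0v' z0(1) wu uv' by (simp add: contr_def)
    next
      case 4
      then have "T1 z \<noteq> Some v'" using z0(3) by blast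
      then show ?thesis using 4 T2o by (simp add: contr_def)
    qed
  qed
  then show ?thesis using h1 h2 hne by simp
qed

end

context twin
begin

lemma M_Xdown:
  assumes ok1: "okt T1" and ok2: "okt T2" and va: "v \<in> desc T1 v'" and wu: "T1 w = Some v'"
    and T2: "T2 = rotate Et T1 v' w"
  shows "phi T2 = phi T1 \<and> hh T1 \<noteq> hh T2"
proof -
  have ac: "acyc T1" using ok_acyc[OF ok1] .
  obtain z0 where z0: "T1 z0 = Some v'" "v \<in> desc T1 z0" "\<forall>c. T1 c = Some v' \<longrightarrow> c = z0"
      "desc T1 v' = insert v' (desc T1 z0)" using typeA_child[OF ok1 va] by blast
  have wz0: "w = z0" using z0(3) wu by blast
  have wv': "w \<noteq> v'" using acyc1[OF ac] wu by metis
  have h1: "hh T1 = (card (desc T1 v') + 1) mod 2 \<and> phi T1 = contr v' T1" using hh_a[OF ok1 va] .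
  have Tv'v': "T1 v' \<noteq> Some v'" using acyc1[OF ac] .
  have T2w: "T2 w = T1 v'" using T2 by (simp add: rotw)
  have T2v': "T2 v' = Some w" using T2 wv' by (simp add: rotu)
  show ?thesis
  proof (cases "w = v")
    case True
    have Tvv': "T1 v = Some v'" using wu True by simp
    have inv: "trf sw T2 = T1"
    proof
      fix z
      consider "z = v" | "z = v'" | "z \<noteq> v \<and> z \<noteq> v'" by blast
      then show "trf sw T2 z = T1 z"
      proof cases
        case 1 then show ?thesis using T2v' True Tvv' by (simp add: trf_def)
      next
        case 2
        have "map_option sw (T1 v') = T1 v'"
        proof (cases "T1 v'")
          case (Some p)
          have "p \<noteq> v" using acyc2[OF ac Tvv'] Some by metis
          moreover have "p \<noteq> v'" using Tv'v' Some by simp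
          ultimately show ?thesis using Some by simp
        qed simp
        then show ?thesis using 2 T2w True by (simp add: trf_def)
      next
        case 3
        have T2z: "T2 z = (if T1 z = Some v \<and> (\<exists>y\<in>desc T1 z. Et v' y) then Some v' else T1 z)"
          unfolding T2 using roto[of z w v' Et T1] 3 True by simp
        show ?thesis
        proof (cases "T1 z = Some v")
          case Tz: True
          have "z \<in> Vt" using ok_par_in[OF ok1 Tz] by blast
          then have "Et v' z" using A_adj 3 by blast
          then have "T2 z = Some v'" using T2z Tz desc_self by metis
          then show ?thesis using 3 Tz by (simp add: trf_def)
        next
          case Tz: False
          have "T2 z = T1 z" using T2z Tz by simp
          moreover have "map_option sw (T1 z) = T1 z"
          proof (cases "T1 z")
            case (Some p)
            have "p \<noteq> v" using Tz Some by simp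
            moreover have "p \<noteq> v'" using z0(3) wz0 True 3 Some by blast
            ultimately show ?thesis using Some by simp
          qed simp
          ultimately show ?thesis using 3 by (simp add: trf_def)
        qed
      qed
    qed
    have v'v2: "v' \<in> desc T2 v" using desc_child[of T2 v' v] T2v' True by simp
    have "phi T2 = contr v' T1" using v'v2 inv by (simp add: phi_def normT_def)
    moreover have "hh T2 = card (desc T1 v') mod 2" using v'v2 inv by (simp add: hh_def normT_def)
    ultimately show ?thesis using h1 by presburger
  next
    case False
    let ?c = w
    have cVt: "?c \<in> Vt" using ok_par_in[OF ok1 wu] by blast
    have vc: "v \<in> desc T1 ?c" using z0(2) wz0 by simp
    have "v \<in> insert ?c (\<Union>{desc T1 x | x. T1 x = Some ?c})" using vc desc_unfold[of T1 ?c] by simp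
    then have "v \<in> \<Union>{desc T1 x | x. T1 x = Some ?c}" using False by auto
    then obtain d0 where d0: "T1 d0 = Some ?c" "v \<in> desc T1 d0" by auto
    have cch: "x = d0" if "T1 x = Some ?c" for x
    proof (rule ccontr)
      assume xd: "x \<noteq> d0"
      have xVt: "x \<in> Vt" using ok_par_in[OF ok1 that] by blast
      have "v \<notin> desc T1 x" using siblings_disjoint[OF ac that d0(1) xd] d0(2) by blast
      then have xv: "x \<noteq> v" by auto
      have "v' \<notin> desc T1 ?c" using acyc_parent_not_desc[OF ac wu] .
      then have xv': "x \<noteq> v'" using desc_child[of T1 x ?c] that by blast
      have "Et x v" using A_adj[OF xVt xv xv'] by blast
      then show False using sib[OF ok1 that d0(1) xd desc_self d0(2)] by blast
    qed
    have v'c: "v' \<notin> desc T1 ?c" using acyc_parent_not_desc[OF ac wu] .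
    have d0c: "d0 \<noteq> ?c" using acyc1[OF ac] d0(1) by metis
    have d0v': "d0 \<noteq> v'" using v'c desc_child[of T1 d0 ?c] d0(1) by blast
    have T2o: "T2 z = T1 z" if "z \<noteq> ?c" "z \<noteq> v'" "z \<noteq> d0" for z
    proof -
      have "T1 z \<noteq> Some ?c" using cch that(3) by blast
      then show ?thesis unfolding T2 by (rule roto_same[OF that(1,2)])
    qed
    have T1o: "T1 z \<noteq> Some v'" if "z \<noteq> ?c" for z using z0(3) wz0 that by blast
    have dv': "desc T1 v' = insert v' (desc T1 ?c)" using z0(4) wz0 by simp
    have dc: "desc T1 ?c = insert ?c (desc T1 d0)"
    proof -
      have "desc T1 ?c = insert ?c (\<Union>{desc T1 x | x. T1 x = Some ?c})" by (rule desc_unfold)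
      also have "{desc T1 x | x. T1 x = Some ?c} = {desc T1 d0}" using cch d0(1) by blast
      finally show ?thesis by simp
    qed
    have cd0: "?c \<notin> desc T1 d0" using acyc_parent_not_desc[OF ac d0(1)] .
    have v'd0: "v' \<notin> desc T1 d0" using v'c dc by blast
    have T2d0: "T2 d0 = (if (\<exists>y\<in>desc T1 d0. Et v' y) then Some v' else Some ?c)"
      unfolding T2 using roto[of d0 ?c v' Et T1] d0c d0v' d0(1) by simp
    have pc: "contr v' T2 ?c = contr v' T1 ?c" using T2w Tv'v' wv' wu by (simp add: contr_def)
    show ?thesis
    proof (cases "\<exists>y\<in>desc T1 d0. Et v' y")
      case M0: True
      have T2d: "T2 d0 = Some v'" using T2d0 M0 by simp
      have dd: "desc T2 d0 = desc T1 d0" using rot_desc_other[of T1 ?c v', OF wu] wv' d0c d0v' T2 by metis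
      have va2: "v \<in> desc T2 v'" using desc_childI[of T2 d0 v' v, OF T2d] dd d0(2) by simp
      have ch2: "x = d0" if "T2 x = Some v'" for x
      proof (rule ccontr)
        assume xd: "x \<noteq> d0"
        show False
        proof (cases "x = ?c \<or> x = v'")
          case True then show False using that T2w Tv'v' T2v' wv' by auto
        next
          case False
          then have "T2 x = T1 x" using T2o xd by blast
          moreover have "T1 x \<noteq> Some v'" using T1o False by blast
          ultimately show False using that by simp
        qed
      qed
      have d2: "desc T2 v' = insert v' (desc T1 d0)"
      proof -
        have "desc T2 v' = insert v' (\<Union>{desc T2 x | x. T2 x = Some v'})" by (rule desc_unfold)
        also have "{desc T2 x | x. T2 x = Some v'} = {desc T2 d0}" using ch2 T2d by blast
        finally show ?thesis using dd by simp
      qed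
      have h2: "hh T2 = (card (desc T2 v') + 1) mod 2 \<and> phi T2 = contr v' T2" using hh_a[OF ok2 va2] .
      have fd0: "finite (desc T1 d0)" using desc_fin[OF ok1] ok_par_in[OF ok1 d0(1)] by blast
      have "card (desc T1 v') = card (desc T1 d0) + 2" using dv' dc cd0 v'd0 fd0 wv' by simp
      moreover have "card (desc T2 v') = card (desc T1 d0) + 1" using d2 v'd0 fd0 by simp
      ultimately have hne: "hh T1 \<noteq> hh T2" using h1 h2 by presburger
      have "contr v' T2 = contr v' T1"
      proof
        fix z
        consider "z = v'" | "z = ?c" | "z = d0" | "z \<noteq> v' \<and> z \<noteq> ?c \<and> z \<noteq> d0" by blast
        then show "contr v' T2 z = contr v' T1 z"
        proof cases
          case 1 then show ?thesis by (simp add: contr_def)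
        next
          case 2 then show ?thesis using pc by simp
        next
          case 3 then show ?thesis using T2d T2v' d0v' d0(1) wv' by (simp add: contr_def)
        next
          case 4
          have "T2 z = T1 z" using T2o 4 by blast
          moreover have "T1 z \<noteq> Some v'" using T1o 4 by blast
          ultimately show ?thesis using 4 by (simp add: contr_def)
        qed
      qed
      then show ?thesis using h1 h2 hne by simp
    next
      case M0: False
      have d0v: "d0 = v"
      proof (rule ccontr)
        assume "d0 \<noteq> v"
        moreover have "d0 \<in> Vt" using ok_par_in[OF ok1 d0(1)] by blast
        ultimately have "Et v' d0" using A_adj d0v' by blast
        then show False using M0 desc_self[of d0 T1] by blast
      qed
      have leaf: "T1 x \<noteq> Some v" for x
      proof
        assume h: "T1 x = Some v"
        have xVt: "x \<in> Vt" using ok_par_in[OF ok1 h] by blast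
        have xv: "x \<noteq> v" using acyc1[OF ac] h by metis
        have "x \<in> desc T1 d0" using desc_child[of T1 x v] h d0v by simp
        then have xv': "x \<noteq> v'" using v'd0 by blast
        have "Et v' x" using A_adj[OF xVt xv xv'] by blast
        then show False using M0 \<open>x \<in> desc T1 d0\<close> by blast
      qed
      have T2v: "T2 v = Some ?c" using T2d0 M0 d0v by simp
      have ch2: "T2 x \<noteq> Some v'" for x
      proof
        assume h: "T2 x = Some v'"
        show False
        proof (cases "x = ?c \<or> x = v' \<or> x = d0")
          case True then show False using h T2w Tv'v' T2v' wv' T2v d0v by auto
        next
          case False
          then have "T2 x = T1 x" using T2o by blast
          moreover have "T1 x \<noteq> Some v'" using T1o False by blast
          ultimately show False using h by simp
        qed
      qed
      have d2': "desc T2 v' = {v'}" using desc_leaf ch2 by metis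
      have dv2: "desc T2 v = desc T1 v" using rot_desc_other[of T1 ?c v', OF wu] wv' d0c d0v' d0v T2 by metis
      have "desc T1 v = {v}" using desc_leaf leaf by metis
      then have nb2: "v \<notin> desc T2 v'" "v' \<notin> desc T2 v" using d2' dv2 vv' by auto
      have h2: "hh T2 = 2 \<and> phi T2 = contr v' T2" using hh_b[OF nb2] .
      have "hh T1 < 2" using hh_typeA va by blast
      then have hne: "hh T1 \<noteq> hh T2" using h2 by simp
      have "contr v' T2 = contr v' T1"
      proof
        fix z
        consider "z = v'" | "z = ?c" | "z = d0" | "z \<noteq> v' \<and> z \<noteq> ?c \<and> z \<noteq> d0" by blast
        then show "contr v' T2 z = contr v' T1 z"
        proof cases
          case 1 then show ?thesis by (simp add: contr_def)
        next
          case 2 then show ?thesis using pc by simp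
        next
          case 3 then show ?thesis using T2v d0v d0v' d0(1) wv' by (simp add: contr_def)
        next
          case 4
          have "T2 z = T1 z" using T2o 4 by blast
          moreover have "T1 z \<noteq> Some v'" using T1o 4 by blast
          ultimately show ?thesis using 4 by (simp add: contr_def)
        qed
      qed
      then show ?thesis using h1 h2 hne by simp
    qed
  qed
qed

end

lemma mod_small2: assumes "(r::nat) < k" "x < k" shows "(r + x) mod k = (if r + x < k then r + x else r + x - k)"
proof (cases "r + x < k")
  case True then show ?thesis by simp
next
  case False
  then have "(r + x) mod k = (r + x - k) mod k" using le_mod_geq[of k "r + x"] by simp
  also have "... = r + x - k" using assms False by simp
  finally show ?thesis using False by simp
qed

lemma modcancel: assumes "(x::nat) < k" "y < k" "(a + x) mod k = (a + y) mod k" shows "x = y"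
proof -
  have k0: "0 < k" using assms(1) by simp
  let ?r = "a mod k"
  have r: "?r < k" using k0 by simp
  have "(a + x) mod k = (?r + x) mod k" by (simp add: mod_add_left_eq)
  moreover have "(a + y) mod k = (?r + y) mod k" by (simp add: mod_add_left_eq)
  ultimately have "(?r + x) mod k = (?r + y) mod k" using assms(3) by simp
  then show ?thesis using mod_small2[OF r assms(1)] mod_small2[OF r assms(2)] assms(1,2) r
    by (simp split: if_splits)
qed

lemma rot_adj_sym: "rot_adj F A B \<Longrightarrow> rot_adj F B A"
  unfolding rot_adj_def by blast

context twin
begin

lemma M_Xb:
  assumes ok1: "okt T1" and ok2: "okt T2" and nb: "v \<notin> desc T1 v'" "v' \<notin> desc T1 v"
    and wu: "T1 w = Some u" and wvv: "w = v \<or> w = v'" and T2: "T2 = rotate Et T1 u w"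
  shows "phi T2 = phi T1 \<and> hh T1 \<noteq> hh T2"
proof -
  have ac: "acyc T1" using ok_acyc[OF ok1] .
  obtain q where s: "\<forall>c. T1 c \<noteq> Some v'" "\<forall>c. T1 c \<noteq> Some v" "T1 v = Some q" "T1 v' = Some q" "q \<in> V" "q \<noteq> v"
    using typeB_struct[OF ok1 nb] by blast
  have uq: "u = q" using wvv wu s by auto
  have qv': "q \<noteq> v'" using s(5) v'V by auto
  have sq: "sw q = q" using s(6) qv' by simp
  have h1: "hh T1 = 2 \<and> phi T1 = contr v' T1" using hh_b[OF nb] .
  have fix1: "map_option sw (T1 x) = T1 x" for x
  proof (cases "T1 x")
    case (Some p)
    then have "p \<noteq> v" "p \<noteq> v'" using s(1,2) by auto
    then show ?thesis using Some by simp
  qed simp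
  have Tq1: "T1 q \<noteq> Some v'" using s(1) by blast
  from wvv show ?thesis
  proof
    assume wv: "w = v"
    have T2v: "T2 v = T1 q" using T2 wv uq by (simp add: rotw)
    have T2q: "T2 q = Some v" using T2 wv uq s(6) by (simp add: rotu)
    have T2o: "T2 z = T1 z" if "z \<noteq> v" "z \<noteq> q" for z
      using T2 wv uq roto_same[OF that] s(2) by metis
    have T2v': "T2 v' = Some q" using T2o[of v'] vv' qv' s(4) by simp
    have "v' \<in> desc T2 v" using desc_trans[of q T2 v v'] desc_child[of T2 v' q] desc_child[of T2 q v] T2v' T2q by simp
    then have ty: "hh T2 < 2" "phi T2 = contr v' (trf sw T2)"
      using hh_typeA by (auto simp: phi_def normT_def)
    have "contr v' (trf sw T2) = contr v' T1"
    proof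
      fix z
      consider "z = v'" | "z = v" | "z = q" | "z \<noteq> v' \<and> z \<noteq> v \<and> z \<noteq> q" by blast
      then show "contr v' (trf sw T2) z = contr v' T1 z"
      proof cases
        case 1 then show ?thesis by (simp add: contr_def)
      next
        case 2 then show ?thesis using T2v' sq s(3) vv' qv' by (simp add: contr_def trf_def)
      next
        case 3
        have "trf sw T2 q = Some v'" using T2q sq by (simp add: trf_def)
        moreover have "trf sw T2 v' = T1 q" using T2v fix1 by (simp add: trf_def)
        ultimately show ?thesis using 3 qv' Tq1 by (simp add: contr_def)
      next
        case 4
        then have "trf sw T2 z = T1 z" using T2o fix1 by (simp add: trf_def)
        then show ?thesis using 4 s(1) by (simp add: contr_def)
      qed
    qed
    then show ?thesis using ty h1 by simp
  next
    assume wv': "w = v'"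
    have T2v': "T2 v' = T1 q" using T2 wv' uq by (simp add: rotw)
    have T2q: "T2 q = Some v'" using T2 wv' uq qv' by (simp add: rotu)
    have T2o: "T2 z = T1 z" if "z \<noteq> v'" "z \<noteq> q" for z
      using T2 wv' uq roto_same[OF that] s(1) by metis
    have T2v: "T2 v = Some q" using T2o[of v] vv' s(6) s(3) by simp
    have va: "v \<in> desc T2 v'" using desc_trans[of q T2 v' v] desc_child[of T2 v q] desc_child[of T2 q v'] T2v T2q by simp
    have ty: "hh T2 < 2" "phi T2 = contr v' T2" using hh_typeA va hh_a[OF ok2 va] by auto
    have "contr v' T2 = contr v' T1"
    proof
      fix z
      consider "z = v'" | "z = q" | "z \<noteq> v' \<and> z \<noteq> q" by blast
      then show "contr v' T2 z = contr v' T1 z"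
      proof cases
        case 1 then show ?thesis by (simp add: contr_def)
      next
        case 2 then show ?thesis using T2q T2v' qv' Tq1 by (simp add: contr_def)
      next
        case 3 then show ?thesis using T2o s(1) by (simp add: contr_def)
      qed
    qed
    then show ?thesis using ty h1 by simp
  qed
qed

lemma M_norm:
  assumes ok1: "okt T1" and ok2: "okt T2" and nrm: "v' \<notin> desc T1 v" and wu: "T1 w = Some u"
    and T2: "T2 = rotate Et T1 u w"
  shows "(phi T2 = phi T1 \<and> hh T1 \<noteq> hh T2) \<or> (rot_adj E (phi T1) (phi T2) \<and> hh T1 = hh T2)"
proof (cases "v \<in> desc T1 v'")
  case va: True
  show ?thesis
  proof (cases "u = v'")
    case True then show ?thesis using M_Xdown[OF ok1 ok2 va] wu T2 by simp
  next
    case uv': False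
    show ?thesis
    proof (cases "w = v'")
      case True then show ?thesis using M_Xup[OF ok1 ok2 va] wu T2 by simp
    next
      case False then show ?thesis using M_N[OF ok1 ok2 nrm wu T2 uv' False] va by simp
    qed
  qed
next
  case nb: False
  obtain q where s: "\<forall>c. T1 c \<noteq> Some v'" "\<forall>c. T1 c \<noteq> Some v"
    using typeB_struct[OF ok1 nb nrm] by blast
  have uv': "u \<noteq> v'" using s wu by blast
  show ?thesis
  proof (cases "w = v \<or> w = v'")
    case True then show ?thesis using M_Xb[OF ok1 ok2 nb nrm wu True T2] by simp
  next
    case False then show ?thesis using M_N[OF ok1 ok2 nrm wu T2 uv'] by simp
  qed
qed

lemma M_gen:
  assumes ok1: "okt T1" and ok2: "okt T2" and wu: "T1 w = Some u"
    and T2: "T2 = rotate Et T1 u w"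
  shows "(phi T2 = phi T1 \<and> hh T1 \<noteq> hh T2) \<or> (rot_adj E (phi T1) (phi T2) \<and> hh T1 = hh T2)"
proof (cases "v' \<in> desc T1 v")
  case False show ?thesis by (rule M_norm[OF ok1 ok2 False wu T2])
next
  case True
  let ?S1 = "trf sw T1" and ?S2 = "trf sw T2"
  have o1: "okt ?S1" and o2: "okt ?S2" using okt_trf ok1 ok2 by auto
  have n1: "v' \<notin> desc ?S1 v" using desc_sw_v'v not_both[OF ok1] True by blast
  have w1: "?S1 (sw w) = Some (sw u)" using wu by (simp add: trf_def)
  have r1: "?S2 = rotate Et ?S1 (sw u) (sw w)"
    using T2 trf_rotate[where f=sw and F=Et, OF sw_inv Et_sw'] by simp
  have m: "(phi ?S2 = phi ?S1 \<and> hh ?S1 \<noteq> hh ?S2) \<or> (rot_adj E (phi ?S1) (phi ?S2) \<and> hh ?S1 = hh ?S2)"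
    using M_norm[OF o1 o2 n1 w1 r1] .
  have p: "phi ?S1 = phi T1" "phi ?S2 = phi T2" using phi_trf ok1 ok2 by auto
  have h: "hh ?S1 = (if hh T1 = 2 then 2 else 1 - hh T1)" "hh ?S2 = (if hh T2 = 2 then 2 else 1 - hh T2)"
    using hh_trf ok1 ok2 by auto
  have "hh ?S1 = hh ?S2 \<longleftrightarrow> hh T1 = hh T2" using h hh_le[of T1] hh_le[of T2] by auto
  then show ?thesis using m p by auto
qed

lemma color_up:
  assumes k3: "3 \<le> k" and fb: "\<forall>x\<in>rot_vertices V E. f x < k"
    and fp: "\<forall>x\<in>rot_vertices V E. \<forall>y\<in>rot_vertices V E. rot_adj E x y \<longrightarrow> f x \<noteq> f y"
  shows "\<exists>g :: ('a \<Rightarrow> 'a option) \<Rightarrow> nat. (\<forall>x\<in>rot_vertices Vt Et. g x < k)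
     \<and> (\<forall>x\<in>rot_vertices Vt Et. \<forall>y\<in>rot_vertices Vt Et. rot_adj Et x y \<longrightarrow> g x \<noteq> g y)"
proof -
  let ?g = "\<lambda>T. (f (phi T) + hh T) mod k"
  have inV: "phi T \<in> rot_vertices V E" if "okt T" for T
    using phi_ok[OF that] st_E by (simp add: rot_vertices_def)
  have okt_iff: "T \<in> rot_vertices Vt Et \<longleftrightarrow> okt T" for T using st_Et by (simp add: rot_vertices_def)
  have k0: "0 < k" using k3 by simp
  have hk: "hh T < k" for T using hh_le[of T] k3 by simp
  have main: "?g T1 \<noteq> ?g T2" if o1: "okt T1" and o2: "okt T2" and
      d: "(phi T2 = phi T1 \<and> hh T1 \<noteq> hh T2) \<or> (rot_adj E (phi T1) (phi T2) \<and> hh T1 = hh T2)" for T1 T2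
  proof
    assume eq: "?g T1 = ?g T2"
    from d show False
    proof
      assume a: "phi T2 = phi T1 \<and> hh T1 \<noteq> hh T2"
      then have "(f (phi T1) + hh T1) mod k = (f (phi T1) + hh T2) mod k" using eq by simp
      then have "hh T1 = hh T2" using modcancel[OF hk hk] by blast
      then show False using a by simp
    next
      assume a: "rot_adj E (phi T1) (phi T2) \<and> hh T1 = hh T2"
      then have ne: "f (phi T1) \<noteq> f (phi T2)" using fp inV[OF o1] inV[OF o2] by blast
      have "(hh T1 + f (phi T1)) mod k = (hh T1 + f (phi T2)) mod k" using eq a by (simp add: add.commute)
      then have "f (phi T1) = f (phi T2)" using modcancel fb inV[OF o1] inV[OF o2] by blast
      then show False using ne by simp
    qed
  qed
  have "\<forall>x\<in>rot_vertices Vt Et. \<forall>y\<in>rot_vertices Vt Et. rot_adj Et x y \<longrightarrow> ?g x \<noteq> ?g y"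
  proof (intro ballI impI)
    fix x y assume xV: "x \<in> rot_vertices Vt Et" and yV: "y \<in> rot_vertices Vt Et" and r: "rot_adj Et x y"
    have ox: "okt x" and oy: "okt y" using xV yV okt_iff by auto
    from r have "(\<exists>u w. x w = Some u \<and> y = rotate Et x u w) \<or> (\<exists>u w. y w = Some u \<and> x = rotate Et y u w)"
      by (simp add: rot_adj_def)
    then show "?g x \<noteq> ?g y"
    proof
      assume "\<exists>u w. x w = Some u \<and> y = rotate Et x u w"
      then obtain u w where "x w = Some u" "y = rotate Et x u w" by blast
      then show ?thesis using main[OF ox oy] M_gen[OF ox oy] by blast
    next
      assume "\<exists>u w. y w = Some u \<and> x = rotate Et y u w"
      then obtain u w where uw: "y w = Some u" "x = rotate Et y u w" by blast
      have "(phi x = phi y \<and> hh y \<noteq> hh x) \<or> (rot_adj E (phi y) (phi x) \<and> hh y = hh x)"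
        using M_gen[OF oy ox uw] .
      then have "(phi y = phi x \<and> hh x \<noteq> hh y) \<or> (rot_adj E (phi x) (phi y) \<and> hh x = hh y)"
        using rot_adj_sym by metis
      then show ?thesis using main[OF ox oy] by blast
    qed
  qed
  moreover have "\<forall>x\<in>rot_vertices Vt Et. ?g x < k" using k0 by simp
  ultimately show ?thesis by (intro exI[where x = ?g]) blast
qed

end

lemma desc_add_top:
  assumes ok: "tree_ok S F T" and aS: "a \<notin> S" and za: "z \<noteq> a"
  shows "desc (add_top S a T) z = desc T z"
proof -
  have Ta: "T a = None" using tree_okD(2)[OF ok aS] .
  have "\<forall>y. add_top S a T y \<noteq> T y \<longrightarrow> T y = None \<and> add_top S a T y = Some a" by (simp add: add_top_def)
  moreover have "add_top S a T a = None" using Ta aS by (simp add: add_top_def)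
  ultimately show ?thesis using desc_eq_extra za by metis
qed

lemma add_top_rot:
  assumes ok: "tree_ok S F T" and aS: "a \<notin> S" and wu: "T w = Some u"
  shows "add_top S a (rotate F T u w) = rotate F (add_top S a T) u w"
proof
  fix z
  have ac: "acyc T" using ok_acyc[OF ok] .
  have uw: "u \<noteq> w" using acyc1[OF ac] wu by metis
  have uS: "u \<in> S" and wS: "w \<in> S" using ok_par_in[OF ok wu] by auto
  have wa: "w \<noteq> a" using wS aS by auto
  have at: "add_top S a T x = Some w \<longleftrightarrow> T x = Some w" for x using wa by (simp add: add_top_def)
  show "add_top S a (rotate F T u w) z = rotate F (add_top S a T) u w z"
  proof (cases "z = w")
    case True then show ?thesis using wS uS by (simp add: rot_cases add_top_def)
  next
    case zw: False
    show ?thesis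
    proof (cases "z = u")
      case True then show ?thesis using zw uS by (simp add: rot_cases add_top_def)
    next
      case zu: False
      show ?thesis
      proof (cases "T z = Some w")
        case True
        have zS: "z \<in> S" using ok_par_in[OF ok True] by blast
        then have za: "z \<noteq> a" using aS by auto
        have d: "desc (add_top S a T) z = desc T z" using desc_add_top[OF ok aS za] .
        show ?thesis using zw zu True d at[of z] by (simp add: rot_cases add_top_def)
      next
        case False
        then have "add_top S a T z \<noteq> Some w" using at by simp
        then show ?thesis using zw zu False by (simp add: rot_cases add_top_def)
      qed
    qed
  qed
qed

lemma add_top_keep: "T z = Some p \<Longrightarrow> add_top S a T z = Some p"
  by (simp add: add_top_def)

primrec chn :: "'a list \<Rightarrow> 'a set \<Rightarrow> ('a \<Rightarrow> 'a option) \<Rightarrow> ('a \<Rightarrow> 'a option)" where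
  "chn [] S X = X"
| "chn (c # cs) S X = add_top (set cs \<union> S) c (chn cs S X)"

lemma chn_keep: "X z = Some p \<Longrightarrow> chn cs S X z = Some p"
  by (induction cs) (auto simp: add_top_keep)

lemma chn_val: "chn cs S X z = X z \<or> (\<exists>c\<in>set cs. chn cs S X z = Some c)"
proof (induction cs)
  case Nil then show ?case by simp
next
  case (Cons c cs)
  then show ?case by (auto simp: add_top_def)
qed

lemma chn_ok:
  assumes "tree_ok S F X" "symm F" "distinct cs" "set cs \<inter> S = {}" "\<forall>c\<in>set cs. \<exists>s\<in>S. F c s"
  shows "tree_ok (set cs \<union> S) F (chn cs S X)"
  using assms(3,4,5)
proof (induction cs)
  case Nil then show ?case using assms(1) by simp
next
  case (Cons c cs)
  have ok: "tree_ok (set cs \<union> S) F (chn cs S X)" using Cons by simp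
  have "c \<notin> set cs \<union> S" using Cons.prems by auto
  moreover have "\<exists>s\<in>set cs \<union> S. F c s" using Cons.prems by auto
  ultimately have "tree_ok (insert c (set cs \<union> S)) F (add_top (set cs \<union> S) c (chn cs S X))"
    using add_top_ok[OF ok _ assms(2)] by blast
  then show ?case by simp
qed

lemma chn_rot:
  assumes "tree_ok S F X" "symm F" "distinct cs" "set cs \<inter> S = {}" "\<forall>c\<in>set cs. \<exists>s\<in>S. F c s"
    and wu: "X w = Some u"
  shows "chn cs S (rotate F X u w) = rotate F (chn cs S X) u w"
  using assms(3,4,5)
proof (induction cs)
  case Nil then show ?case by simp
next
  case (Cons c cs)
  have ok: "tree_ok (set cs \<union> S) F (chn cs S X)" using chn_ok[OF assms(1,2)] Cons.prems by simp
  have c: "c \<notin> set cs \<union> S" using Cons.prems by auto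
  have w2: "chn cs S X w = Some u" using chn_keep wu by metis
  have "chn (c # cs) S (rotate F X u w) = add_top (set cs \<union> S) c (rotate F (chn cs S X) u w)"
    using Cons by simp
  also have "... = rotate F (add_top (set cs \<union> S) c (chn cs S X)) u w"
    using add_top_rot[OF ok c w2] .
  finally show ?case by simp
qed

context twin
begin

lemma ext_rot:
  assumes ok: "tree_ok V Et T" and wu: "T w = Some u"
  shows "ext (rotate E T u w) = rotate Et (ext T) u w"
  unfolding ext_def rot_E_Et[OF ok wu] using add_top_rot[OF ok v'V wu] .

lemma ext_inj:
  assumes o1: "tree_ok V Et T1" and o2: "tree_ok V Et T2" and e: "ext T1 = ext T2"
  shows "T1 = T2"
proof
  fix z
  have h: "X z = (if z \<notin> V then None else if ext X z = Some v' then None else ext X z)"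
    if "tree_ok V Et X" for X
  proof (cases "z \<in> V")
    case True
    have "X z \<noteq> Some v'" using ok_par_in[OF that] v'V by blast
    then show ?thesis using True by (auto simp: ext_def add_top_def)
  next
    case False then show ?thesis using tree_okD(2)[OF that] by simp
  qed
  show "T1 z = T2 z" using h[OF o1] h[OF o2] e by simp
qed

lemma color_down:
  assumes fb: "\<forall>x\<in>rot_vertices Vt Et. f x < k"
    and fp: "\<forall>x\<in>rot_vertices Vt Et. \<forall>y\<in>rot_vertices Vt Et. rot_adj Et x y \<longrightarrow> f x \<noteq> f y"
  shows "\<exists>g :: ('a \<Rightarrow> 'a option) \<Rightarrow> nat. (\<forall>x\<in>rot_vertices V E. g x < k)
     \<and> (\<forall>x\<in>rot_vertices V E. \<forall>y\<in>rot_vertices V E. rot_adj E x y \<longrightarrow> g x \<noteq> g y)"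
proof -
  have inT: "ext T \<in> rot_vertices Vt Et" if "T \<in> rot_vertices V E" for T
    using that ext_ok st_E st_Et by (simp add: rot_vertices_def)
  have adj: "rot_adj Et (ext T1) (ext T2)" if "T1 \<in> rot_vertices V E" "T2 \<in> rot_vertices V E" "rot_adj E T1 T2" for T1 T2
  proof -
    have o1: "tree_ok V Et T1" and o2: "tree_ok V Et T2" using that(1,2) st_E by (auto simp: rot_vertices_def)
    have ne: "ext T1 \<noteq> ext T2" using ext_inj[OF o1 o2] that(3) by (auto simp: rot_adj_def)
    have ek: "ext X w = Some u" if "X w = Some u" for X w u using that by (simp add: ext_def add_top_keep)
    from that(3) have "(\<exists>u w. T1 w = Some u \<and> T2 = rotate E T1 u w) \<or> (\<exists>u w. T2 w = Some u \<and> T1 = rotate E T2 u w)"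
      by (simp add: rot_adj_def)
    then show ?thesis
    proof
      assume "\<exists>u w. T1 w = Some u \<and> T2 = rotate E T1 u w"
      then obtain u w where uw: "T1 w = Some u" "T2 = rotate E T1 u w" by blast
      then have "ext T2 = rotate Et (ext T1) u w" using ext_rot[OF o1 uw(1)] by simp
      then show ?thesis using ne ek[of T1 w u, OF uw(1)] unfolding rot_adj_def by blast
    next
      assume "\<exists>u w. T2 w = Some u \<and> T1 = rotate E T2 u w"
      then obtain u w where uw: "T2 w = Some u" "T1 = rotate E T2 u w" by blast
      then have "ext T1 = rotate Et (ext T2) u w" using ext_rot[OF o2 uw(1)] by simp
      then show ?thesis using ne ek[of T2 w u, OF uw(1)] unfolding rot_adj_def by blast
    qed
  qed
  show ?thesis
    apply (rule exI[where x = "\<lambda>T. f (ext T)"])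
    using fb fp inT adj by blast
qed

end

context twin
begin

lemma leaf_ok: "tree_ok {x} E (\<lambda>z. None)"
  by (rule tree_okI[of _ _ x]) (auto simp: desc_leaf conn_singleton)

lemma no_small_col:
  assumes k: "k < 3"
  shows "\<not> (\<exists>f :: ('a \<Rightarrow> 'a option) \<Rightarrow> nat. (\<forall>x\<in>rot_vertices V E. f x < k)
     \<and> (\<forall>x\<in>rot_vertices V E. \<forall>y\<in>rot_vertices V E. rot_adj E x y \<longrightarrow> f x \<noteq> f y))"
proof
  assume "\<exists>f :: ('a \<Rightarrow> 'a option) \<Rightarrow> nat. (\<forall>x\<in>rot_vertices V E. f x < k)
     \<and> (\<forall>x\<in>rot_vertices V E. \<forall>y\<in>rot_vertices V E. rot_adj E x y \<longrightarrow> f x \<noteq> f y)"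
  then obtain f :: "('a \<Rightarrow> 'a option) \<Rightarrow> nat" where fb: "\<forall>x\<in>rot_vertices V E. f x < k"
    and fp: "\<forall>x\<in>rot_vertices V E. \<forall>y\<in>rot_vertices V E. rot_adj E x y \<longrightarrow> f x \<noteq> f y" by blast
  obtain a b where ab: "a \<in> V" "b \<in> V" "a \<noteq> b" "\<not> E a b" using nc by blast
  have av: "a \<noteq> v"
  proof
    assume "a = v" then have "E v b" using univ ab by auto
    then show False using ab \<open>a = v\<close> by simp
  qed
  have bv: "b \<noteq> v"
  proof
    assume "b = v" then have "E v a" using univ ab by auto
    then have "E a b" using E_sym \<open>b = v\<close> by simp
    then show False using ab by simp
  qed
  have Eva: "E v a" "E a v" "E v b" "E b v" using Ev_iff Ev_iff2 ab av bv by auto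
  have Eba: "\<not> E b a" using ab E_sym by blast
  let ?B = "{a, v, b}"
  have BV: "?B \<subseteq> V" using ab vV by auto
  have finC: "finite (V - ?B)" using finV by simp
  obtain cs where cs: "distinct cs" "set cs = V - ?B" using finite_distinct_list[OF finC] by metis
  have csB: "set cs \<inter> ?B = {}" using cs by auto
  have csV: "set cs \<union> ?B = V" using cs BV by auto
  have csadj: "\<forall>c\<in>set cs. \<exists>s\<in>?B. E c s"
  proof
    fix c assume "c \<in> set cs"
    then have "c \<in> V" "c \<noteq> v" using cs by auto
    then have "E c v" using Ev_iff2 by simp
    then show "\<exists>s\<in>?B. E c s" by blast
  qed
  define L :: "'a \<Rightarrow> 'a option" where "L = (\<lambda>z. None)"
  define B1 where "B1 = (\<lambda>z. if z = a \<or> z = b then Some v else None)"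
  define B2 where "B2 = add_top {v, b} a (add_top {b} v L)"
  define B3 where "B3 = add_top {b, v} a (add_top {v} b L)"
  define B4 where "B4 = add_top {a, v} b (add_top {v} a L)"
  define B5 where "B5 = add_top {v, a} b (add_top {a} v L)"
  have B2e: "B2 = (\<lambda>z. if z = v then Some a else if z = b then Some v else None)"
    using av bv ab(3) by (auto simp: B2_def add_top_def L_def fun_eq_iff)
  have B3e: "B3 = (\<lambda>z. if z = b then Some a else if z = v then Some b else None)"
    using av bv ab(3) by (auto simp: B3_def add_top_def L_def fun_eq_iff)
  have B4e: "B4 = (\<lambda>z. if z = a then Some b else if z = v then Some a else None)"
    using av bv ab(3) by (auto simp: B4_def add_top_def L_def fun_eq_iff)
  have B5e: "B5 = (\<lambda>z. if z = v then Some b else if z = a then Some v else None)"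
    using av bv ab(3) by (auto simp: B5_def add_top_def L_def fun_eq_iff)
  have Bset: "?B = insert a (insert v {b})" by simp
  have lok: "tree_ok (insert x {y}) E (add_top {y} x L)" if "y \<in> V" "x \<noteq> y" "E x y" for x y
    using add_top_ok[OF leaf_ok[of y, folded L_def] _ symmE, of x] that by simp
  have lok2: "tree_ok (insert z (insert x {y})) E (add_top (insert x {y}) z (add_top {y} x L))"
    if "y \<in> V" "x \<noteq> y" "E x y" "z \<noteq> x" "z \<noteq> y" "E z x \<or> E z y" for x y z
    using add_top_ok[OF lok[OF that(1-3)] _ symmE, of z] that by auto
  have ok2: "tree_ok ?B E B2"
  proof -
    have "tree_ok (insert a (insert v {b})) E B2" unfolding B2_def
      using lok2[of b v a] ab Eva av bv by simp
    then show ?thesis by simp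
  qed
  have ok3: "tree_ok ?B E B3"
  proof -
    have "tree_ok (insert a (insert b {v})) E B3" unfolding B3_def
      using lok2[of v b a] vV bv ab Eva av by (simp add: insert_commute)
    moreover have "insert a (insert b {v}) = ?B" by auto
    ultimately show ?thesis by simp
  qed
  have ok4: "tree_ok ?B E B4"
  proof -
    have "tree_ok (insert b (insert a {v})) E B4" unfolding B4_def
      using lok2[of v a b] vV bv ab Eva av Eba by (simp add: insert_commute)
    moreover have "insert b (insert a {v}) = ?B" by auto
    ultimately show ?thesis by simp
  qed
  have ok5: "tree_ok ?B E B5"
  proof -
    have "tree_ok (insert b (insert v {a})) E B5" unfolding B5_def
      using lok2[of a v b] ab Eva av bv by (simp add: insert_commute)
    moreover have "insert b (insert v {a}) = ?B" by auto
    ultimately show ?thesis by simp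
  qed
  have ok1: "tree_ok ?B E B1"
  proof -
    have la: "desc B1 a = {a}" using desc_leaf[of B1 a] av by (simp add: B1_def)
    have lb: "desc B1 b = {b}" using desc_leaf[of B1 b] bv by (simp add: B1_def)
    have ch: "{desc B1 c | c. B1 c = Some v} = {{a}, {b}}"
    proof -
      have e: "B1 c = Some v \<longleftrightarrow> c = a \<or> c = b" for c by (simp add: B1_def)
      have "{desc B1 c | c. B1 c = Some v} = {desc B1 c | c. c = a \<or> c = b}" by (simp only: e)
      also have "... = {{a}, {b}}" using la lb by auto
      finally show ?thesis .
    qed
    have dv: "desc B1 v = ?B" using desc_unfold[of B1 v] ch by auto
    have cv: "conn E ?B"
    proof -
      have "\<forall>C\<in>{{a},{b}}. conn E C \<and> (\<exists>c\<in>C. E v c)" using conn_singleton Eva by auto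
      then have "conn E (insert v (\<Union>{{a},{b}}))" by (rule conn_star[OF symmE])
      moreover have "insert v (\<Union>{{a},{b}}) = ?B" by auto
      ultimately show ?thesis by simp
    qed
    show ?thesis
    proof (rule tree_okI[of _ _ v])
      show "finite ?B" by simp
      show "v \<in> ?B" by simp
      show "B1 v = None" using av bv by (simp add: B1_def)
      show "desc B1 v = ?B" using dv .
    next
      fix x assume "x \<notin> ?B" then show "B1 x = None" by (auto simp: B1_def)
    next
      fix x y assume "B1 x = Some y" then show "y \<in> ?B" by (auto simp: B1_def split: if_splits)
    next
      fix z assume "z \<in> ?B"
      then show "conn E (desc B1 z)" using la lb dv cv conn_singleton by auto
    next
      fix x y assume "x \<in> ?B" "y \<in> ?B" "E x y"
      then show "x \<in> desc B1 y \<or> y \<in> desc B1 x" using dv ab(4) Eba by auto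
    qed
  qed
  have r1: "rotate E B1 v a = B2" unfolding B2e using av bv ab(3)
    by (auto simp: fun_eq_iff rot_cases B1_def)
  have r2: "rotate E B2 v b = B3" unfolding B2e B3e using av bv ab(3)
    by (auto simp: fun_eq_iff rot_cases)
  have "\<forall>c. B3 c \<noteq> Some v" using av bv ab(3) by (simp add: B3e)
  then have l3: "desc B3 v = {v}" by (rule desc_leaf)
  have r3: "rotate E B3 a b = B4" unfolding B4e using av bv ab(3) l3 Eva
    by (auto simp: fun_eq_iff rot_cases B3e)
  have r4: "rotate E B4 a v = B5" unfolding B4e B5e using av bv ab(3)
    by (auto simp: fun_eq_iff rot_cases)
  have "\<forall>c. B5 c \<noteq> Some a" using av bv ab(3) by (simp add: B5e)
  then have l5: "desc B5 a = {a}" by (rule desc_leaf)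
  have r5: "rotate E B5 b v = B1" unfolding B1_def using av bv ab(3) l5 Eba
    by (auto simp: fun_eq_iff rot_cases B5e)
  define T where "T X = chn cs ?B X" for X
  have Tok: "T X \<in> rot_vertices V E" if "tree_ok ?B E X" for X
  proof -
    have "tree_ok (set cs \<union> ?B) E (T X)" unfolding T_def using chn_ok[OF that symmE cs(1) csB csadj] .
    then have "tree_ok V E (T X)" using csV by simp
    then show ?thesis using search_tree_iff[OF finV symmE] by (simp add: rot_vertices_def)
  qed
  have adjT: "rot_adj E (T X) (T (rotate E X u w))" if "tree_ok ?B E X" "X w = Some u" "T X \<noteq> T (rotate E X u w)" for X u w
  proof -
    have "T (rotate E X u w) = rotate E (T X) u w" unfolding T_def using chn_rot[OF that(1) symmE cs(1) csB csadj that(2)] .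
    moreover have "T X w = Some u" unfolding T_def using chn_keep that(2) by metis
    ultimately show ?thesis unfolding rot_adj_def using that(3) by blast
  qed
  have diff: "T X \<noteq> T Y" if "X z = Some p" "p \<in> ?B" "Y z \<noteq> Some p" for X Y z p
  proof
    assume "T X = T Y"
    have "T X z = Some p" unfolding T_def using chn_keep that(1) by metis
    moreover have "T Y z = Y z \<or> (\<exists>c\<in>set cs. T Y z = Some c)" unfolding T_def by (rule chn_val)
    ultimately show False using \<open>T X = T Y\<close> that(2,3) csB by auto
  qed
  have d12: "T B1 \<noteq> T B2" using diff[of B1 a v B2] B2e av ab(3) by (simp add: B1_def)
  have d23: "T B2 \<noteq> T B3" using diff[of B2 v a B3] B2e B3e av bv ab(3) by simp
  have d34: "T B3 \<noteq> T B4" using diff[of B3 v b B4] B3e B4e av bv ab(3) by simp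
  have d45: "T B4 \<noteq> T B5" using diff[of B4 v a B5] B4e B5e av bv ab(3) by simp
  have d51: "T B5 \<noteq> T B1" using diff[of B5 v b B1] B5e av bv ab(3) by (simp add: B1_def)
  have a12: "rot_adj E (T B1) (T B2)" using adjT[OF ok1, of a v] r1 d12 by (simp add: B1_def)
  have a23: "rot_adj E (T B2) (T B3)" using adjT[OF ok2, of b v] r2 d23 B2e bv by simp
  have a34: "rot_adj E (T B3) (T B4)" using adjT[OF ok3, of b a] r3 d34 B3e by simp
  have a45: "rot_adj E (T B4) (T B5)" using adjT[OF ok4, of v a] r4 d45 B4e av bv by simp
  have a51: "rot_adj E (T B5) (T B1)" using adjT[OF ok5, of v b] r5 d51 B5e by simp
  have m: "T B1 \<in> rot_vertices V E" "T B2 \<in> rot_vertices V E" "T B3 \<in> rot_vertices V E"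
    "T B4 \<in> rot_vertices V E" "T B5 \<in> rot_vertices V E" using Tok ok1 ok2 ok3 ok4 ok5 by auto
  have "f (T B1) \<noteq> f (T B2)" "f (T B2) \<noteq> f (T B3)" "f (T B3) \<noteq> f (T B4)"
    "f (T B4) \<noteq> f (T B5)" "f (T B5) \<noteq> f (T B1)"
    using fp m a12 a23 a34 a45 a51 by blast+
  moreover have "f (T B1) < k" "f (T B2) < k" "f (T B3) < k" "f (T B4) < k" "f (T B5) < k"
    using fb m by blast+
  ultimately show False using k by linarith
qed

lemma chi_eq: "chi_rot Vt Et = chi_rot V E"
proof -
  let ?P = "\<lambda>k. \<exists>f :: ('a \<Rightarrow> 'a option) \<Rightarrow> nat. (\<forall>x\<in>rot_vertices Vt Et. f x < k)
      \<and> (\<forall>x\<in>rot_vertices Vt Et. \<forall>y\<in>rot_vertices Vt Et. rot_adj Et x y \<longrightarrow> f x \<noteq> f y)"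
  let ?Q = "\<lambda>k. \<exists>f :: ('a \<Rightarrow> 'a option) \<Rightarrow> nat. (\<forall>x\<in>rot_vertices V E. f x < k)
      \<and> (\<forall>x\<in>rot_vertices V E. \<forall>y\<in>rot_vertices V E. rot_adj E x y \<longrightarrow> f x \<noteq> f y)"
  have "?P k \<longleftrightarrow> ?Q k" for k
  proof
    assume "?P k"
    then obtain f :: "('a \<Rightarrow> 'a option) \<Rightarrow> nat" where "\<forall>x\<in>rot_vertices Vt Et. f x < k"
      "\<forall>x\<in>rot_vertices Vt Et. \<forall>y\<in>rot_vertices Vt Et. rot_adj Et x y \<longrightarrow> f x \<noteq> f y" by blast
    then show "?Q k" using color_down by blast
  next
    assume q: "?Q k"
    show "?P k"
    proof (cases "3 \<le> k")
      case True
      obtain f :: "('a \<Rightarrow> 'a option) \<Rightarrow> nat" where "\<forall>x\<in>rot_vertices V E. f x < k"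
        "\<forall>x\<in>rot_vertices V E. \<forall>y\<in>rot_vertices V E. rot_adj E x y \<longrightarrow> f x \<noteq> f y" using q by blast
      then show ?thesis using color_up[OF True] by blast
    next
      case False
      then have k3: "k < 3" by simp
      from no_small_col[OF k3] q have False by blast
      then show ?thesis ..
    qed
  qed
  then have "?P = ?Q" by (intro ext)
  then show ?thesis unfolding chi_rot_def chromatic_number_def by simp
qed

end

theorem corollary3p8:
  fixes V :: "'a set" and E :: "'a \<Rightarrow> 'a \<Rightarrow> bool" and v v' :: 'a
  assumes "graph V E"
    and "conn E V"
    and "\<exists>x\<in>V. \<exists>y\<in>V. x \<noteq> y \<and> \<not> E x y"
    and "v \<in> V" and "\<forall>x\<in>V. x \<noteq> v \<longrightarrow> E v x"
    and "v' \<notin> V"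
  shows "chi_rot (insert v' V) (add_false_twin E v v') = chi_rot V E"
proof -
  interpret t: twin V E v v' using assms by (rule twin.intro)
  have "chi_rot t.Vt t.Et = chi_rot V E" by (rule t.chi_eq)
  then show ?thesis by (simp add: t.Vt_def t.Et_def)
qed

end
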